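(* Let $(G,M,\Delta)$ be a Garside structure and $(H,N,\delta)$ a parabolic substructure with $H\neq\{1\}$. Let $\mathcal S=\mathrm{Div}(\Delta)\setminus\{1\}$, let $\lg$ be word length in $G$ with respect to $\mathcal S$, and for a right coset $C$ of $H$ let $\lg(C)=\min\{\lg(\beta):\beta\in C\}$. For $n\in\mathbb N$ let $e(n)$ be the number of right cosets of $H$ in $G$ of length $n$. Then the coset growth series $\mathrm{Gr}_{G,H,\mathcal S}(t)=\sum_{n=0}^\infty e(n)t^n$ is a rational function of $t$.
   Context: Let $G$ be a group and $M$ a submonoid with $M\cap M^{-1}=\{1\}$. Define $\alpha\le_L\beta$ iff $\alpha^{-1}\beta\in M$, and $\alpha\le_R\beta$ iff $\beta\alpha^{-1}\in M$. For $a\in M$ let $\mathrm{Div}_L(a)=\{b\in M: b\le_L a\}$, $\mathrm{Div}_R(a)=\{b\in M: b\le_R a\}$; $a$ is balanced if these coincide, and then $\mathrm{Div}(a)$ denotes this set. $M$ is Noetherian if each $a\in M$ admits an $n$ such that $a$ is not a product of more than $n$ non-trivial factors. A Garside structure $(G,M,\Delta)$: $\Delta\in M$ balanced, $M$ Noetherian, $\mathrm{Div}(\Delta)$ finite and generating $M$ as a monoid and $G$ as a group, $(G,\le_L)$ a lattice. A parabolic substructure $(H,N,\delta)$: $\delta\in M$ balanced, $H$ (resp. $N$) the subgroup (resp. submonoid) generated by $\mathrm{Div}(\delta)$, and $\mathrm{Div}(\delta)=\mathrm{Div}(\Delta)\cap N$. *)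

theory Defs
  imports "HOL-Algebra.Algebra" "HOL-Computational_Algebra.Polynomial_FPS"
begin

definition lprod :: "('a, 'b) monoid_scheme \<Rightarrow> 'a list \<Rightarrow> 'a" where
  "lprod G xs = foldr (\<lambda>x y. x \<otimes>\<^bsub>G\<^esub> y) xs \<one>\<^bsub>G\<^esub>"

definition mon_gen :: "('a, 'b) monoid_scheme \<Rightarrow> 'a set \<Rightarrow> 'a set" where
  "mon_gen G A = {lprod G xs | xs. set xs \<subseteq> A}"

definition leL :: "('a, 'b) monoid_scheme \<Rightarrow> 'a set \<Rightarrow> 'a \<Rightarrow> 'a \<Rightarrow> bool" where
  "leL G M x y \<longleftrightarrow> inv\<^bsub>G\<^esub> x \<otimes>\<^bsub>G\<^esub> y \<in> M"

definition leR :: "('a, 'b) monoid_scheme \<Rightarrow> 'a set \<Rightarrow> 'a \<Rightarrow> 'a \<Rightarrow> bool" where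
  "leR G M x y \<longleftrightarrow> y \<otimes>\<^bsub>G\<^esub> inv\<^bsub>G\<^esub> x \<in> M"

definition DivL :: "('a, 'b) monoid_scheme \<Rightarrow> 'a set \<Rightarrow> 'a \<Rightarrow> 'a set" where
  "DivL G M a = {b \<in> M. leL G M b a}"

definition DivR :: "('a, 'b) monoid_scheme \<Rightarrow> 'a set \<Rightarrow> 'a \<Rightarrow> 'a set" where
  "DivR G M a = {b \<in> M. leR G M b a}"

definition balanced :: "('a, 'b) monoid_scheme \<Rightarrow> 'a set \<Rightarrow> 'a \<Rightarrow> bool" where
  "balanced G M a \<longleftrightarrow> a \<in> M \<and> DivL G M a = DivR G M a"

text \<open>Div(a) for balanced a (the common value of DivL and DivR).\<close>
definition Div :: "('a, 'b) monoid_scheme \<Rightarrow> 'a set \<Rightarrow> 'a \<Rightarrow> 'a set" where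
  "Div G M a = DivL G M a"

definition noetherian :: "('a, 'b) monoid_scheme \<Rightarrow> 'a set \<Rightarrow> bool" where
  "noetherian G M \<longleftrightarrow> (\<forall>a\<in>M. \<exists>n::nat. \<forall>xs. set xs \<subseteq> M - {\<one>\<^bsub>G\<^esub>} \<and> lprod G xs = a
      \<longrightarrow> length xs \<le> n)"

definition leL_lattice :: "('a, 'b) monoid_scheme \<Rightarrow> 'a set \<Rightarrow> bool" where
  "leL_lattice G M \<longleftrightarrow>
     (\<forall>x\<in>carrier G. leL G M x x) \<and>
     (\<forall>x\<in>carrier G. \<forall>y\<in>carrier G. leL G M x y \<and> leL G M y x \<longrightarrow> x = y) \<and>
     (\<forall>x\<in>carrier G. \<forall>y\<in>carrier G. \<forall>z\<in>carrier G. leL G M x y \<and> leL G M y z \<longrightarrow> leL G M x z) \<and>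
     (\<forall>x\<in>carrier G. \<forall>y\<in>carrier G. \<exists>s\<in>carrier G. leL G M x s \<and> leL G M y s \<and>
         (\<forall>u\<in>carrier G. leL G M x u \<and> leL G M y u \<longrightarrow> leL G M s u)) \<and>
     (\<forall>x\<in>carrier G. \<forall>y\<in>carrier G. \<exists>i\<in>carrier G. leL G M i x \<and> leL G M i y \<and>
         (\<forall>u\<in>carrier G. leL G M u x \<and> leL G M u y \<longrightarrow> leL G M u i))"

definition garside_structure :: "('a, 'b) monoid_scheme \<Rightarrow> 'a set \<Rightarrow> 'a \<Rightarrow> bool" where
  "garside_structure G M \<Delta> \<longleftrightarrow>
     group G \<and> submonoid M G \<and> {x \<in> M. inv\<^bsub>G\<^esub> x \<in> M} = {\<one>\<^bsub>G\<^esub>} \<and>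
     balanced G M \<Delta> \<and> noetherian G M \<and> finite (Div G M \<Delta>) \<and>
     mon_gen G (Div G M \<Delta>) = M \<and> generate G (Div G M \<Delta>) = carrier G \<and>
     leL_lattice G M"

definition parabolic_substructure ::
  "('a, 'b) monoid_scheme \<Rightarrow> 'a set \<Rightarrow> 'a \<Rightarrow> 'a set \<Rightarrow> 'a set \<Rightarrow> 'a \<Rightarrow> bool" where
  "parabolic_substructure G M \<Delta> H N \<delta> \<longleftrightarrow>
     \<delta> \<in> M \<and> balanced G M \<delta> \<and> H = generate G (Div G M \<delta>) \<and> N = mon_gen G (Div G M \<delta>) \<and>
     Div G M \<delta> = Div G M \<Delta> \<inter> N"

definition word_length :: "('a, 'b) monoid_scheme \<Rightarrow> 'a set \<Rightarrow> 'a \<Rightarrow> nat" where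
  "word_length G S g = (LEAST n. \<exists>xs. length xs = n \<and> set xs \<subseteq> S \<union> (\<lambda>s. inv\<^bsub>G\<^esub> s) ` S \<and> lprod G xs = g)"

definition coset_length :: "('a, 'b) monoid_scheme \<Rightarrow> 'a set \<Rightarrow> 'a set \<Rightarrow> nat" where
  "coset_length G S C = (LEAST n. \<exists>\<beta>\<in>C. word_length G S \<beta> = n)"

definition coset_count :: "('a, 'b) monoid_scheme \<Rightarrow> 'a set \<Rightarrow> 'a set \<Rightarrow> nat \<Rightarrow> nat" where
  "coset_count G H S n = card {C \<in> rcosets\<^bsub>G\<^esub> H. coset_length G S C = n}"

definition rational_fps :: "'a::field fps \<Rightarrow> bool" where
  "rational_fps F \<longleftrightarrow> (\<exists>p q. q \<noteq> 0 \<and> fps_of_poly q * F = fps_of_poly p)"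

end

theory Submission
  imports Defs
begin


lemma rat_fps_poly: "rational_fps (fps_of_poly p)"
  unfolding rational_fps_def by (rule exI[of _ p], rule exI[of _ 1]) simp

lemma rat_fps_const: "rational_fps (fps_const c)"
  using rat_fps_poly[of "[:c:]"] by (simp add: fps_of_poly_const)

lemma rat_fps_X: "rational_fps fps_X"
  using rat_fps_poly[of "[:0,1:]"] by (simp add: fps_of_poly_simps)

lemma rat_fps_add:
  assumes "rational_fps F" "rational_fps G'" shows "rational_fps (F + G')"
proof -
  from assms obtain p q p' q' where q: "q \<noteq> 0" "fps_of_poly q * F = fps_of_poly p"
    "q' \<noteq> 0" "fps_of_poly q' * G' = fps_of_poly p'" unfolding rational_fps_def by blast
  have "fps_of_poly (q*q') * (F + G') = fps_of_poly q' * (fps_of_poly q * F) + fps_of_poly q * (fps_of_poly q' * G')"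
    by (simp add: fps_of_poly_mult algebra_simps)
  also have "\<dots> = fps_of_poly (q'*p + q*p')" using q by (simp add: fps_of_poly_mult fps_of_poly_add)
  finally show ?thesis unfolding rational_fps_def using q by (intro exI[of _ "q'*p + q*p'"] exI[of _ "q*q'"]) simp
qed

lemma rat_fps_mult:
  assumes "rational_fps F" "rational_fps G'" shows "rational_fps (F * G')"
proof -
  from assms obtain p q p' q' where q: "q \<noteq> 0" "fps_of_poly q * F = fps_of_poly p"
    "q' \<noteq> 0" "fps_of_poly q' * G' = fps_of_poly p'" unfolding rational_fps_def by blast
  have "fps_of_poly (q*q') * (F * G') = (fps_of_poly q * F) * (fps_of_poly q' * G')"
    by (simp add: fps_of_poly_mult algebra_simps)
  also have "\<dots> = fps_of_poly (p*p')" using q by (simp add: fps_of_poly_mult)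
  finally show ?thesis unfolding rational_fps_def using q by (intro exI[of _ "p*p'"] exI[of _ "q*q'"]) simp
qed

lemma rat_fps_uminus:
  assumes "rational_fps F" shows "rational_fps (- F)"
  using rat_fps_mult[OF rat_fps_const[of "-1"] assms] by (simp del: fps_const_neg add: fps_const_neg[symmetric])

lemma rat_fps_diff:
  assumes "rational_fps F" "rational_fps G'" shows "rational_fps (F - G')"
  using rat_fps_add[OF assms(1) rat_fps_uminus[OF assms(2)]] by simp

lemma rat_fps_sum:
  assumes "\<And>i. i \<in> A \<Longrightarrow> rational_fps (f i)" shows "rational_fps (\<Sum>i\<in>A. f i)"
  using assms
proof (induction A rule: infinite_finite_induct)
  case (infinite A) then show ?case using rat_fps_const[of 0] by simp
next
  case empty then show ?case using rat_fps_const[of 0] by simp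
next
  case (insert x F) then show ?case by (simp add: rat_fps_add)
qed

lemma rat_fps_inverse:
  assumes "rational_fps (F :: rat fps)" "fps_nth (F) 0 \<noteq> 0" shows "rational_fps (inverse F)"
proof -
  from assms obtain p q where q: "q \<noteq> 0" "fps_of_poly q * F = fps_of_poly p"
    unfolding rational_fps_def by blast
  have "p \<noteq> 0"
  proof
    assume "p = 0"
    then have "fps_of_poly q * F = 0" using q by simp
    moreover have "F \<noteq> 0" using assms(2) by auto
    ultimately have "fps_of_poly q = 0" by simp
    then show False using q(1) by simp
  qed
  have "fps_of_poly p * inverse F = fps_of_poly q"
    using q(2)[symmetric] inverse_mult_eq_1'[OF assms(2)] by (simp add: mult.assoc)
  then show ?thesis unfolding rational_fps_def using \<open>p \<noteq> 0\<close> by blast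
qed

lemma rat_fps_deriv:
  assumes "rational_fps (F :: rat fps)" shows "rational_fps (fps_deriv F)"
proof -
  from assms obtain p q where q: "q \<noteq> 0" "fps_of_poly q * F = fps_of_poly p"
    unfolding rational_fps_def by blast
  have "fps_deriv (fps_of_poly q * F) = fps_deriv (fps_of_poly p)" using q by simp
  then have "fps_of_poly q * fps_deriv F = fps_of_poly (pderiv p) - fps_of_poly (pderiv q) * F"
    by (simp add: fps_of_poly_pderiv algebra_simps)
  then have "fps_of_poly q * (fps_of_poly q * fps_deriv F) = fps_of_poly q * (fps_of_poly (pderiv p) - fps_of_poly (pderiv q) * F)"
    by simp
  also have "\<dots> = fps_of_poly q * fps_of_poly (pderiv p) - fps_of_poly (pderiv q) * (fps_of_poly q * F)"
    by (simp add: algebra_simps)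
  also have "\<dots> = fps_of_poly (q * pderiv p - pderiv q * p)"
    using q(2) by (simp add: fps_of_poly_mult fps_of_poly_diff)
  finally have "fps_of_poly (q*q) * fps_deriv F = fps_of_poly (q * pderiv p - pderiv q * p)"
    by (simp add: fps_of_poly_mult mult.assoc)
  then show ?thesis unfolding rational_fps_def using q(1)
    by (intro exI[of _ "q * pderiv p - pderiv q * p"] exI[of _ "q*q"]) simp
qed

lemma linsys_rational:
  fixes Y b :: "'s \<Rightarrow> rat fps" and c :: "'s \<Rightarrow> 's \<Rightarrow> rat fps"
  assumes "finite U"
    and "\<forall>s\<in>U. Y s = b s + (\<Sum>s'\<in>U. c s s' * Y s')"
    and "\<forall>s\<in>U. rational_fps (b s)"
    and "\<forall>s\<in>U. \<forall>s'\<in>U. rational_fps (c s s') \<and> fps_nth (c s s') 0 = 0"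
  shows "\<forall>s\<in>U. rational_fps (Y s)"
  using assms
proof (induction U arbitrary: b c rule: finite_induct)
  case empty then show ?case by simp
next
  case (insert s0 U)
  define d where "d = 1 - c s0 s0"
  have d0: "fps_nth (d) 0 \<noteq> 0" using insert.prems(3) unfolding d_def by simp
  have rd: "rational_fps d" unfolding d_def
    using rat_fps_diff[OF rat_fps_const[of 1], of "c s0 s0"] insert.prems(3) by simp
  define \<beta> where "\<beta> = inverse d * b s0"
  define \<gamma> where "\<gamma> s' = inverse d * c s0 s'" for s'
  have e0: "Y s0 = b s0 + c s0 s0 * Y s0 + (\<Sum>s'\<in>U. c s0 s' * Y s')"
  proof -
    have "Y s0 = b s0 + (\<Sum>s'\<in>insert s0 U. c s0 s' * Y s')" using insert.prems(1) by blast
    then show ?thesis using insert.hyps by (simp add: add.assoc)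
  qed
  have "d * Y s0 = b s0 + (\<Sum>s'\<in>U. c s0 s' * Y s')"
    using e0 unfolding d_def by (simp add: algebra_simps)
  moreover have "inverse d * (d * Y s0) = Y s0"
    by (simp add: mult.assoc[symmetric] inverse_mult_eq_1[OF d0])
  moreover have "inverse d * (b s0 + (\<Sum>s'\<in>U. c s0 s' * Y s')) = \<beta> + (\<Sum>s'\<in>U. \<gamma> s' * Y s')"
    unfolding \<beta>_def \<gamma>_def by (simp add: distrib_left sum_distrib_left mult.assoc)
  ultimately have Y0: "Y s0 = \<beta> + (\<Sum>s'\<in>U. \<gamma> s' * Y s')" by metis
  have rinv: "rational_fps (inverse d)" using rat_fps_inverse[OF rd d0] .
  have r\<beta>: "rational_fps \<beta>" unfolding \<beta>_def using rinv insert.prems(2) by (simp add: rat_fps_mult)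
  have r\<gamma>: "rational_fps (\<gamma> s')" if "s' \<in> U" for s'
    unfolding \<gamma>_def using rinv insert.prems(3) that by (simp add: rat_fps_mult)
  have \<gamma>0: "fps_nth (\<gamma> s') 0 = 0" if "s' \<in> U" for s'
    unfolding \<gamma>_def using insert.prems(3) that by simp
  define b' where "b' s = b s + c s s0 * \<beta>" for s
  define c' where "c' s s' = c s s' + c s s0 * \<gamma> s'" for s s'
  have eqs: "\<forall>s\<in>U. Y s = b' s + (\<Sum>s'\<in>U. c' s s' * Y s')"
  proof
    fix s assume s: "s \<in> U"
    have "Y s = b s + (\<Sum>s'\<in>insert s0 U. c s s' * Y s')" using insert.prems(1) s by blast
    then have "Y s = b s + c s s0 * Y s0 + (\<Sum>s'\<in>U. c s s' * Y s')"
      using insert.hyps by (simp add: add.assoc)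
    also have "\<dots> = b' s + (\<Sum>s'\<in>U. c' s s' * Y s')"
      unfolding Y0 b'_def c'_def
      by (simp add: algebra_simps sum.distrib sum_distrib_left)
    finally show "Y s = b' s + (\<Sum>s'\<in>U. c' s s' * Y s')" .
  qed
  have IH: "\<forall>s\<in>U. rational_fps (Y s)"
  proof (rule insert.IH[OF eqs])
    show "\<forall>s\<in>U. rational_fps (b' s)" unfolding b'_def using insert.prems r\<beta>
      by (auto intro!: rat_fps_add rat_fps_mult)
    show "\<forall>s\<in>U. \<forall>s'\<in>U. rational_fps (c' s s') \<and> fps_nth (c' s s') 0 = 0"
      unfolding c'_def using insert.prems r\<gamma> \<gamma>0
      by (auto intro!: rat_fps_add rat_fps_mult)
  qed
  have "rational_fps (Y s0)" unfolding Y0 using r\<beta> r\<gamma> IH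
    by (auto intro!: rat_fps_add rat_fps_sum rat_fps_mult)
  then show ?case using IH by simp
qed

lemma transfer_rational:
  fixes v :: "nat \<Rightarrow> 's \<Rightarrow> rat" and A :: "'s \<Rightarrow> 's \<Rightarrow> rat"
  assumes "finite D" and "\<And>w s. s \<in> D \<Longrightarrow> v (Suc w) s = (\<Sum>s'\<in>D. A s s' * v w s')"
  shows "\<forall>s\<in>D. rational_fps (Abs_fps (\<lambda>w. v w s))"
proof (rule linsys_rational[OF assms(1), where b = "\<lambda>s. fps_const (v 0 s)"
      and c = "\<lambda>s s'. fps_const (A s s') * fps_X"])
  show "\<forall>s\<in>D. Abs_fps (\<lambda>w. v w s) = fps_const (v 0 s) +
      (\<Sum>s'\<in>D. fps_const (A s s') * fps_X * Abs_fps (\<lambda>w. v w s'))"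
  proof
    fix s assume s: "s \<in> D"
    show "Abs_fps (\<lambda>w. v w s) = fps_const (v 0 s) +
      (\<Sum>s'\<in>D. fps_const (A s s') * fps_X * Abs_fps (\<lambda>w. v w s'))"
    proof (rule fps_ext)
      fix n show "fps_nth (Abs_fps (\<lambda>w. v w s)) n = fps_nth (fps_const (v 0 s) +
      (\<Sum>s'\<in>D. fps_const (A s s') * fps_X * Abs_fps (\<lambda>w. v w s'))) n"
        using assms(2)[OF s] by (cases n) (simp_all add: fps_sum_nth mult.assoc)
    qed
  qed
  show "\<forall>s\<in>D. rational_fps (fps_const (v 0 s))" by (simp add: rat_fps_const)
  show "\<forall>s\<in>D. \<forall>s'\<in>D. rational_fps (fps_const (A s s') * fps_X) \<and> fps_nth (fps_const (A s s') * fps_X) 0 = 0"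
    by (simp add: rat_fps_mult rat_fps_const rat_fps_X)
qed




lemma lprod_Nil[simp]: "lprod G [] = \<one>\<^bsub>G\<^esub>" by (simp add: lprod_def)
lemma lprod_Cons[simp]: "lprod G (x # xs) = x \<otimes>\<^bsub>G\<^esub> lprod G xs" by (simp add: lprod_def)

locale gars = group G for G :: "('a, 'b) monoid_scheme" (structure) +
  fixes M :: "'a set" and \<Delta> :: 'a
  assumes gs: "garside_structure G M \<Delta>"
begin

abbreviation "D \<equiv> Div G M \<Delta>"
abbreviation "lel x y \<equiv> leL G M x y"

lemma sm: "submonoid M G" using gs by (simp add: garside_structure_def)
lemma M_carr[simp]: "x \<in> M \<Longrightarrow> x \<in> carrier G" using submonoid.subset[OF sm] by blast
lemma one_M[simp]: "\<one> \<in> M" using submonoid.one_closed[OF sm] .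
lemma mult_M[simp, intro]: "x \<in> M \<Longrightarrow> y \<in> M \<Longrightarrow> x \<otimes> y \<in> M" using submonoid.m_closed[OF sm] .
lemma MM: "x \<in> M \<Longrightarrow> inv x \<in> M \<Longrightarrow> x = \<one>"
  using gs unfolding garside_structure_def by blast
lemma balD: "balanced G M \<Delta>" using gs by (simp add: garside_structure_def)
lemma Delta_M[simp]: "\<Delta> \<in> M" using balD by (simp add: balanced_def)
lemma Delta_carr[simp]: "\<Delta> \<in> carrier G" by simp
lemma finD: "finite D" using gs by (simp add: garside_structure_def)
lemma monD: "mon_gen G D = M" using gs by (simp add: garside_structure_def)
lemma genD: "generate G D = carrier G" using gs by (simp add: garside_structure_def)
lemma latt: "leL_lattice G M" using gs by (simp add: garside_structure_def)
lemma noeth: "noetherian G M" using gs by (simp add: garside_structure_def)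

lemma cl1[simp]: "x \<in> carrier G \<Longrightarrow> y \<in> carrier G \<Longrightarrow> inv x \<otimes> (x \<otimes> y) = y"
  by (simp add: m_assoc[symmetric])
lemma cl2[simp]: "x \<in> carrier G \<Longrightarrow> y \<in> carrier G \<Longrightarrow> x \<otimes> (inv x \<otimes> y) = y"
  by (simp add: m_assoc[symmetric])

lemmas gsimp = m_assoc inv_mult_group

lemma D_iff: "s \<in> D \<longleftrightarrow> s \<in> M \<and> inv s \<otimes> \<Delta> \<in> M"
  by (simp add: Div_def DivL_def leL_def)
lemma D_M[simp]: "s \<in> D \<Longrightarrow> s \<in> M" using D_iff by blast
lemma D_L: "s \<in> D \<Longrightarrow> inv s \<otimes> \<Delta> \<in> M" using D_iff by blast
lemma DI: "s \<in> M \<Longrightarrow> inv s \<otimes> \<Delta> \<in> M \<Longrightarrow> s \<in> D" using D_iff by blast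
lemma D_carr[simp]: "s \<in> D \<Longrightarrow> s \<in> carrier G" by simp
lemma balEq: "DivL G M \<Delta> = DivR G M \<Delta>" using balD by (simp add: balanced_def)
lemma D_R: assumes "s \<in> D" shows "\<Delta> \<otimes> inv s \<in> M"
proof -
  have "s \<in> DivR G M \<Delta>" using assms unfolding Div_def balEq .
  then show ?thesis unfolding DivR_def leR_def by blast
qed
lemma DR_iff: assumes "s \<in> M" "\<Delta> \<otimes> inv s \<in> M" shows "s \<in> D"
proof -
  have "s \<in> DivR G M \<Delta>" using assms unfolding DivR_def leR_def by blast
  then show ?thesis unfolding Div_def balEq .
qed
lemma one_D[simp]: "\<one> \<in> D" by (rule DI) simp_all
lemma Delta_D[simp]: "\<Delta> \<in> D" by (rule DI) simp_all

lemma comp1: "s \<in> D \<Longrightarrow> inv s \<otimes> \<Delta> \<in> D"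
  by (rule DR_iff) (auto simp: D_L gsimp)
lemma comp2: "s \<in> D \<Longrightarrow> \<Delta> \<otimes> inv s \<in> D"
  by (rule DI) (auto simp: D_R gsimp)

lemma phi_D: "s \<in> D \<Longrightarrow> inv \<Delta> \<otimes> s \<otimes> \<Delta> \<in> D"
proof -
  assume s: "s \<in> D"
  have "inv \<Delta> \<otimes> s \<otimes> \<Delta> = inv (inv s \<otimes> \<Delta>) \<otimes> \<Delta>" using s by (simp add: gsimp)
  then show ?thesis using comp1[OF comp1[OF s]] by simp
qed

lemma psi_D: "s \<in> D \<Longrightarrow> \<Delta> \<otimes> s \<otimes> inv \<Delta> \<in> D"
proof -
  assume s: "s \<in> D"
  have "\<Delta> \<otimes> s \<otimes> inv \<Delta> = \<Delta> \<otimes> inv (\<Delta> \<otimes> inv s)" using s by (simp add: gsimp)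
  then show ?thesis using comp2[OF comp2[OF s]] by simp
qed

lemma lprod_carr[simp]: "set xs \<subseteq> carrier G \<Longrightarrow> lprod G xs \<in> carrier G"
  by (induction xs) auto
lemma lprod_append: "set xs \<subseteq> carrier G \<Longrightarrow> set ys \<subseteq> carrier G \<Longrightarrow>
   lprod G (xs @ ys) = lprod G xs \<otimes> lprod G ys"
  by (induction xs) (auto simp: m_assoc)
lemma lprod_M: "set xs \<subseteq> M \<Longrightarrow> lprod G xs \<in> M"
  by (induction xs) auto

lemma M_lprod: assumes "x \<in> M" shows "\<exists>xs. set xs \<subseteq> D \<and> lprod G xs = x"
proof -
  have "x \<in> mon_gen G D" using monD assms by simp
  then show ?thesis unfolding mon_gen_def by blast
qed

lemma conj_M:
  assumes "x \<in> M" "\<And>s. s \<in> D \<Longrightarrow> inv g \<otimes> s \<otimes> g \<in> M" "g \<in> carrier G"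
  shows "inv g \<otimes> x \<otimes> g \<in> M"
proof -
  obtain xs where xs: "set xs \<subseteq> D" "lprod G xs = x" using M_lprod[OF assms(1)] by blast
  have "inv g \<otimes> lprod G xs \<otimes> g \<in> M" using xs(1)
  proof (induction xs)
    case Nil then show ?case using assms(3) by simp
  next
    case (Cons s xs)
    have sub: "set xs \<subseteq> carrier G" using Cons.prems by auto
    have "inv g \<otimes> lprod G (s # xs) \<otimes> g = (inv g \<otimes> s \<otimes> g) \<otimes> (inv g \<otimes> lprod G xs \<otimes> g)"
      using Cons.prems assms(3) sub by (simp add: gsimp)
    then show ?case using Cons assms(2) by simp
  qed
  then show ?thesis using xs by simp
qed

lemma phi_M: "x \<in> M \<Longrightarrow> inv \<Delta> \<otimes> x \<otimes> \<Delta> \<in> M"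
  by (rule conj_M) (auto dest: phi_D)
lemma psi_M: "x \<in> M \<Longrightarrow> \<Delta> \<otimes> x \<otimes> inv \<Delta> \<in> M"
  using conj_M[of x "inv \<Delta>"] psi_D by auto

lemma pow_carr[simp]: "\<Delta> [^] (n::nat) \<in> carrier G" by simp
lemma pow_M[simp]: "\<Delta> [^] (n::nat) \<in> M" by (induction n) auto

lemma phin_M: "x \<in> M \<Longrightarrow> inv (\<Delta> [^] (n::nat)) \<otimes> x \<otimes> \<Delta> [^] n \<in> M"
proof (induction n)
  case 0 then show ?case by simp
next
  case (Suc n)
  have "inv (\<Delta> [^] Suc n) \<otimes> x \<otimes> \<Delta> [^] Suc n = inv \<Delta> \<otimes> (inv (\<Delta> [^] n) \<otimes> x \<otimes> \<Delta> [^] n) \<otimes> \<Delta>"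
    using Suc.prems by (simp add: gsimp)
  then show ?case using phi_M[OF Suc.IH[OF Suc.prems]] by simp
qed

lemma psin_M: "x \<in> M \<Longrightarrow> \<Delta> [^] (n::nat) \<otimes> x \<otimes> inv (\<Delta> [^] n) \<in> M"
proof (induction n arbitrary: x)
  case 0 then show ?case by simp
next
  case (Suc n)
  have "\<Delta> [^] Suc n \<otimes> x \<otimes> inv (\<Delta> [^] Suc n) = \<Delta> [^] n \<otimes> (\<Delta> \<otimes> x \<otimes> inv \<Delta>) \<otimes> inv (\<Delta> [^] n)"
    using Suc.prems by (simp add: gsimp)
  then show ?case using Suc.IH[OF psi_M[OF Suc.prems]] by simp
qed

lemma phin_D: "s \<in> D \<Longrightarrow> inv (\<Delta> [^] (n::nat)) \<otimes> s \<otimes> \<Delta> [^] n \<in> D"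
proof (induction n)
  case 0 then show ?case by simp
next
  case (Suc n)
  have "inv (\<Delta> [^] Suc n) \<otimes> s \<otimes> \<Delta> [^] Suc n = inv \<Delta> \<otimes> (inv (\<Delta> [^] n) \<otimes> s \<otimes> \<Delta> [^] n) \<otimes> \<Delta>"
    using Suc.prems by (simp add: gsimp)
  then show ?case using phi_D[OF Suc.IH[OF Suc.prems]] by simp
qed


lemma lel_iff: "lel x y \<longleftrightarrow> inv x \<otimes> y \<in> M" by (simp add: leL_def)

lemma lel_refl[simp]: "x \<in> carrier G \<Longrightarrow> lel x x" by (simp add: lel_iff)
lemma lel_trans: "lel x y \<Longrightarrow> lel y z \<Longrightarrow> x \<in> carrier G \<Longrightarrow> y \<in> carrier G \<Longrightarrow> z \<in> carrier G \<Longrightarrow> lel x z"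
proof -
  assume a: "lel x y" "lel y z" "x \<in> carrier G" "y \<in> carrier G" "z \<in> carrier G"
  have "(inv x \<otimes> y) \<otimes> (inv y \<otimes> z) = inv x \<otimes> z" using a by (simp add: gsimp)
  then show ?thesis using a mult_M[of "inv x \<otimes> y" "inv y \<otimes> z"] by (simp add: lel_iff)
qed
lemma lel_antisym: "lel x y \<Longrightarrow> lel y x \<Longrightarrow> x \<in> carrier G \<Longrightarrow> y \<in> carrier G \<Longrightarrow> x = y"
proof -
  assume a: "lel x y" "lel y x" "x \<in> carrier G" "y \<in> carrier G"
  have "inv (inv x \<otimes> y) = inv y \<otimes> x" using a by (simp add: gsimp)
  then have "inv x \<otimes> y = \<one>" using a MM[of "inv x \<otimes> y"] by (simp add: lel_iff)
  then have "x \<otimes> (inv x \<otimes> y) = x" using a by simp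
  then show ?thesis using a by simp
qed
lemma lel_left: "g \<in> carrier G \<Longrightarrow> x \<in> carrier G \<Longrightarrow> y \<in> carrier G \<Longrightarrow> lel (g \<otimes> x) (g \<otimes> y) \<longleftrightarrow> lel x y"
  by (simp add: lel_iff gsimp)
lemma lel_1: "x \<in> carrier G \<Longrightarrow> lel \<one> x \<longleftrightarrow> x \<in> M" by (simp add: lel_iff)
lemma lel_Delta: "s \<in> M \<Longrightarrow> lel s \<Delta> \<longleftrightarrow> s \<in> D" unfolding lel_iff using D_iff by blast
lemma lel_mult: "x \<in> carrier G \<Longrightarrow> y \<in> M \<Longrightarrow> lel x (x \<otimes> y)" by (simp add: lel_iff)

definition gmeet where "gmeet x y = (SOME i. i \<in> carrier G \<and> lel i x \<and> lel i y \<and> (\<forall>u\<in>carrier G. lel u x \<and> lel u y \<longrightarrow> lel u i))"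
definition gjoin where "gjoin x y = (SOME s. s \<in> carrier G \<and> lel x s \<and> lel y s \<and> (\<forall>u\<in>carrier G. lel x u \<and> lel y u \<longrightarrow> lel s u))"

lemma gmeet: assumes "x \<in> carrier G" "y \<in> carrier G"
  shows "gmeet x y \<in> carrier G" "lel (gmeet x y) x" "lel (gmeet x y) y"
    "\<And>u. u \<in> carrier G \<Longrightarrow> lel u x \<Longrightarrow> lel u y \<Longrightarrow> lel u (gmeet x y)"
proof -
  have L: "\<forall>x\<in>carrier G. \<forall>y\<in>carrier G. \<exists>i\<in>carrier G. lel i x \<and> lel i y \<and>
         (\<forall>u\<in>carrier G. lel u x \<and> lel u y \<longrightarrow> lel u i)"
    using latt unfolding leL_lattice_def by (elim conjE) assumption
  have "\<exists>i. i \<in> carrier G \<and> lel i x \<and> lel i y \<and> (\<forall>u\<in>carrier G. lel u x \<and> lel u y \<longrightarrow> lel u i)"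
    using bspec[OF bspec[OF L assms(1)] assms(2)] by blast
  from someI_ex[OF this] show "gmeet x y \<in> carrier G" "lel (gmeet x y) x" "lel (gmeet x y) y"
    "\<And>u. u \<in> carrier G \<Longrightarrow> lel u x \<Longrightarrow> lel u y \<Longrightarrow> lel u (gmeet x y)"
    unfolding gmeet_def by blast+
qed

lemma gjoin: assumes "x \<in> carrier G" "y \<in> carrier G"
  shows "gjoin x y \<in> carrier G" "lel x (gjoin x y)" "lel y (gjoin x y)"
    "\<And>u. u \<in> carrier G \<Longrightarrow> lel x u \<Longrightarrow> lel y u \<Longrightarrow> lel (gjoin x y) u"
proof -
  have L: "\<forall>x\<in>carrier G. \<forall>y\<in>carrier G. \<exists>s\<in>carrier G. lel x s \<and> lel y s \<and>
         (\<forall>u\<in>carrier G. lel x u \<and> lel y u \<longrightarrow> lel s u)"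
    using latt unfolding leL_lattice_def by (elim conjE) assumption
  have "\<exists>s. s \<in> carrier G \<and> lel x s \<and> lel y s \<and> (\<forall>u\<in>carrier G. lel x u \<and> lel y u \<longrightarrow> lel s u)"
    using bspec[OF bspec[OF L assms(1)] assms(2)] by blast
  from someI_ex[OF this] show "gjoin x y \<in> carrier G" "lel x (gjoin x y)" "lel y (gjoin x y)"
    "\<And>u. u \<in> carrier G \<Longrightarrow> lel x u \<Longrightarrow> lel y u \<Longrightarrow> lel (gjoin x y) u"
    unfolding gjoin_def by blast+
qed

lemma meet_M: "x \<in> M \<Longrightarrow> y \<in> M \<Longrightarrow> gmeet x y \<in> M"
  using gmeet(4)[of x y \<one>] gmeet(1)[of x y] lel_1 by simp

definition hdD where "hdD x = gmeet x \<Delta>"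

lemma hd_D: "x \<in> M \<Longrightarrow> hdD x \<in> D"
  unfolding hdD_def using gmeet[of x \<Delta>] meet_M[of x \<Delta>] by (simp add: lel_Delta)
lemma hd_le: "x \<in> M \<Longrightarrow> lel (hdD x) x" unfolding hdD_def using gmeet[of x \<Delta>] by simp
lemma hd_glb: "x \<in> M \<Longrightarrow> u \<in> carrier G \<Longrightarrow> lel u x \<Longrightarrow> lel u \<Delta> \<Longrightarrow> lel u (hdD x)"
  unfolding hdD_def using gmeet[of x \<Delta>] by simp
lemma hd_M[simp]: "x \<in> M \<Longrightarrow> hdD x \<in> M" using hd_D D_M by blast
lemma hd_carr[simp]: "x \<in> M \<Longrightarrow> hdD x \<in> carrier G" using hd_D D_M by simp
lemma hd_eq: "x \<in> M \<Longrightarrow> lel \<Delta> x \<Longrightarrow> hdD x = \<Delta>"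
proof -
  assume a: "x \<in> M" "lel \<Delta> x"
  have "lel (hdD x) \<Delta>" using hd_D[OF a(1)] lel_Delta[of "hdD x"] a by simp
  moreover have "lel \<Delta> (hdD x)" using hd_glb[OF a(1), of \<Delta>] a by simp
  ultimately show ?thesis using lel_antisym[of "hdD x" \<Delta>] a by simp
qed

lemma Delta_le: "x \<in> M \<Longrightarrow> lel \<Delta> (x \<otimes> \<Delta>)"
  by (simp add: lel_iff phi_M gsimp[symmetric])

lemma HL: assumes x: "x \<in> M" and y: "y \<in> M" shows "hdD (x \<otimes> y) = hdD (x \<otimes> hdD y)"
proof -
  define e where "e = hdD (x \<otimes> y)"
  have xy: "x \<otimes> y \<in> M" using x y by simp
  have eM: "e \<in> M" unfolding e_def using xy by (rule hd_M)
  have e1: "lel e (x \<otimes> y)" unfolding e_def using xy by (rule hd_le)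
  have e2: "lel e \<Delta>" unfolding e_def using hd_D[OF xy] lel_Delta[OF hd_M[OF xy]] by blast
  define j where "j = gjoin e x"
  have jc: "j \<in> carrier G" and je: "lel e j" and jx: "lel x j"
    using gjoin(1,2,3)[of e x] eM x unfolding j_def by auto
  have j1: "lel j (x \<otimes> y)" unfolding j_def
    by (rule gjoin(4)) (use e1 x y xy eM lel_mult in auto)
  have xD: "lel \<Delta> (x \<otimes> \<Delta>)" using Delta_le[OF x] .
  have "lel e (x \<otimes> \<Delta>)" by (rule lel_trans[OF e2 xD]) (use eM x in auto)
  then have j2: "lel j (x \<otimes> \<Delta>)" unfolding j_def
    by (intro gjoin(4)) (use eM x lel_mult[of x \<Delta>] in auto)
  define c where "c = inv x \<otimes> j"
  have cM: "c \<in> M" using jx unfolding c_def lel_iff .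
  have jc': "j = x \<otimes> c" unfolding c_def using x jc by simp
  have "lel c y" using j1 lel_left[of x c y] x y cM jc' by simp
  moreover have "lel c \<Delta>" using j2 lel_left[of x c \<Delta>] x cM jc' by simp
  ultimately have "lel c (hdD y)" using hd_glb[OF y] cM by simp
  then have "lel (x \<otimes> c) (x \<otimes> hdD y)" using lel_left[of x c "hdD y"] x y cM by simp
  then have ehy: "lel e (x \<otimes> hdD y)"
    by (intro lel_trans[of e "x \<otimes> c" "x \<otimes> hdD y"]) (use je jc' x y cM eM in auto)
  have xhy: "x \<otimes> hdD y \<in> M" using x y by simp
  have le1: "lel e (hdD (x \<otimes> hdD y))"
    by (rule hd_glb[OF xhy]) (use ehy e2 eM in auto)
  have "lel (x \<otimes> hdD y) (x \<otimes> y)" using lel_left[of x "hdD y" y] hd_le[OF y] x y by simp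
  then have a1: "lel (hdD (x \<otimes> hdD y)) (x \<otimes> y)"
    by (intro lel_trans[OF hd_le[OF xhy]]) (use x y in auto)
  have a2: "lel (hdD (x \<otimes> hdD y)) \<Delta>" using hd_D[OF xhy] lel_Delta[OF hd_M[OF xhy]] by blast
  have "lel (hdD (x \<otimes> hdD y)) e" unfolding e_def
    by (rule hd_glb[OF xy]) (use a1 a2 xhy in auto)
  then show ?thesis using le1 lel_antisym[of e "hdD (x \<otimes> hdD y)"] eM xhy unfolding e_def by simp
qed

end



context gars begin

definition HI where "HI n x \<longleftrightarrow> inv x \<otimes> \<Delta> [^] (n::nat) \<in> M"
definition LO where "LO n x \<longleftrightarrow> \<Delta> [^] (n::nat) \<otimes> x \<in> M"

lemma pow_Suc2: "\<Delta> [^] Suc n = \<Delta> \<otimes> \<Delta> [^] (n::nat)"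
  using nat_pow_Suc2[of \<Delta> n] by simp

lemma pow_comm: "\<Delta> [^] (n::nat) \<otimes> \<Delta> = \<Delta> \<otimes> \<Delta> [^] n"
  using nat_pow_Suc2[of \<Delta> n] by simp
lemma pow_comm': "z \<in> carrier G \<Longrightarrow> \<Delta> [^] (n::nat) \<otimes> (\<Delta> \<otimes> z) = \<Delta> \<otimes> (\<Delta> [^] n \<otimes> z)"
  using pow_comm[of n] by (simp add: m_assoc[symmetric])

lemma pow_add: "\<Delta> [^] (a + b) = \<Delta> [^] (a::nat) \<otimes> \<Delta> [^] b"
  using nat_pow_mult[of \<Delta> a b] by simp

lemma SUP_step:
  assumes x: "x \<in> M" and h: "HI (Suc n) x"
  shows "HI n (inv (hdD x) \<otimes> x)"
proof -
  define t where "t = \<Delta> [^] Suc n \<otimes> inv x"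
  have "t = \<Delta> [^] Suc n \<otimes> (inv x \<otimes> \<Delta> [^] Suc n) \<otimes> inv (\<Delta> [^] Suc n)"
    unfolding t_def using x by (simp add: gsimp)
  then have tM: "t \<in> M" using psin_M[of "inv x \<otimes> \<Delta> [^] Suc n" "Suc n"] h unfolding HI_def by simp
  have tx: "t \<otimes> x = \<Delta> [^] Suc n" unfolding t_def using x by (simp add: gsimp)
  define s where "s = hdD x"
  have sD: "s \<in> D" unfolding s_def using hd_D[OF x] .
  have "hdD (t \<otimes> x) = \<Delta>"
    unfolding tx by (rule hd_eq) (simp_all add: lel_iff pow_comm pow_comm' gsimp)
  then have e: "hdD (t \<otimes> s) = \<Delta>" unfolding s_def using HL[OF tM x] by simp
  have "lel \<Delta> (t \<otimes> s)" using hd_le[of "t \<otimes> s"] tM sD e by simp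
  then have t'M: "inv \<Delta> \<otimes> (t \<otimes> s) \<in> M" unfolding lel_iff .
  define x' where "x' = inv s \<otimes> x"
  have "(inv \<Delta> \<otimes> (t \<otimes> s)) \<otimes> x' = inv \<Delta> \<otimes> (t \<otimes> x)"
    unfolding x'_def using tM sD x by (simp add: gsimp)
  also have "\<dots> = \<Delta> [^] n" unfolding tx by (simp add: pow_comm)
  finally have eq: "(inv \<Delta> \<otimes> (t \<otimes> s)) \<otimes> x' = \<Delta> [^] n" .
  have x'c: "x' \<in> carrier G" unfolding x'_def using sD x by simp
  have "inv x' \<otimes> \<Delta> [^] n = inv (\<Delta> [^] n) \<otimes> (inv \<Delta> \<otimes> (t \<otimes> s)) \<otimes> \<Delta> [^] n"
    unfolding eq[symmetric] using tM sD x'c by (simp add: gsimp)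
  then show ?thesis unfolding HI_def x'_def s_def using phin_M[OF t'M, of n] by (simp add: s_def)
qed

lemma HI_step: assumes "s \<in> D" "y \<in> carrier G" "HI n y" shows "HI (Suc n) (s \<otimes> y)"
proof -
  have "inv (s \<otimes> y) \<otimes> \<Delta> [^] Suc n = (inv y \<otimes> \<Delta> [^] n) \<otimes> (inv (\<Delta> [^] n) \<otimes> (inv s \<otimes> \<Delta>) \<otimes> \<Delta> [^] n)"
    using assms by (simp add: gsimp pow_comm pow_comm')
  then show ?thesis using assms phin_M[OF D_L[OF assms(1)], of n] unfolding HI_def by simp
qed

lemma HI_0: "x \<in> M \<Longrightarrow> HI 0 x \<Longrightarrow> x = \<one>"
  unfolding HI_def using MM by simp

lemma SUP: "x \<in> M \<Longrightarrow> HI n x \<Longrightarrow> \<exists>xs. length xs = n \<and> set xs \<subseteq> D \<and> lprod G xs = x"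
proof (induction n arbitrary: x)
  case 0 then show ?case using HI_0 by (intro exI[of _ "[]"]) simp
next
  case (Suc n)
  define s where "s = hdD x"
  have sD: "s \<in> D" unfolding s_def using hd_D[OF Suc.prems(1)] .
  have x'M: "inv s \<otimes> x \<in> M" using hd_le[OF Suc.prems(1)] unfolding s_def lel_iff .
  have "HI n (inv s \<otimes> x)" unfolding s_def using SUP_step Suc.prems by blast
  then obtain xs where xs: "length xs = n" "set xs \<subseteq> D" "lprod G xs = inv s \<otimes> x"
    using Suc.IH x'M by blast
  show ?case using xs sD Suc.prems(1) by (intro exI[of _ "s # xs"]) simp
qed

lemma HI_mono: "HI a x \<Longrightarrow> x \<in> carrier G \<Longrightarrow> a \<le> b \<Longrightarrow> HI b x"
proof (induction b)
  case 0 then show ?case by simp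
next
  case (Suc b)
  show ?case
  proof (cases "a \<le> b")
    case True
    then have "HI b x" using Suc by blast
    then have "(inv x \<otimes> \<Delta> [^] b) \<otimes> \<Delta> \<in> M" unfolding HI_def by simp
    then show ?thesis unfolding HI_def using Suc.prems by (simp add: gsimp)
  next
    case False then have "a = Suc b" using Suc.prems by simp
    then show ?thesis using Suc.prems by simp
  qed
qed

lemma LO_mono: "LO a x \<Longrightarrow> x \<in> carrier G \<Longrightarrow> a \<le> b \<Longrightarrow> LO b x"
proof (induction b)
  case 0 then show ?case by simp
next
  case (Suc b)
  show ?case
  proof (cases "a \<le> b")
    case True
    then have "LO b x" using Suc by blast
    then have "\<Delta> \<otimes> (\<Delta> [^] b \<otimes> x) \<in> M" unfolding LO_def by simp
    then show ?thesis unfolding LO_def using Suc.prems by (simp add: gsimp pow_comm pow_comm')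
  next
    case False then have "a = Suc b" using Suc.prems by simp
    then show ?thesis using Suc.prems by simp
  qed
qed

abbreviation "S \<equiv> D - {\<one>}"
abbreviation "Lt \<equiv> S \<union> (\<lambda>s. inv s) ` S"

lemma word_bound:
  "set xs \<subseteq> Lt \<Longrightarrow> \<exists>a b. a + b = length xs \<and> LO b (lprod G xs) \<and> HI a (lprod G xs)"
proof (induction xs)
  case Nil then show ?case by (intro exI[of _ 0]) (simp add: LO_def HI_def)
next
  case (Cons z xs)
  then obtain a b where ab: "a + b = length xs" "LO b (lprod G xs)" "HI a (lprod G xs)" by auto
  have Lc: "set xs \<subseteq> carrier G" using Cons.prems by auto
  define y where "y = lprod G xs"
  have yc: "y \<in> carrier G" unfolding y_def using Lc by simp
  show ?case
  proof (cases "z \<in> S")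
    case True
    then have sD: "z \<in> D" by simp
    have "\<Delta> [^] b \<otimes> (z \<otimes> y) = (\<Delta> [^] b \<otimes> z \<otimes> inv (\<Delta> [^] b)) \<otimes> (\<Delta> [^] b \<otimes> y)"
      using sD yc by (simp add: gsimp)
    then have "LO b (z \<otimes> y)" using psin_M[of z b] sD ab(2) unfolding LO_def y_def by simp
    moreover have "HI (Suc a) (z \<otimes> y)" using HI_step[OF sD yc] ab(3) unfolding y_def by simp
    ultimately show ?thesis using ab(1) unfolding y_def by (intro exI[of _ "Suc a"] exI[of _ b]) simp
  next
    case False
    then obtain s where s: "s \<in> D" "z = inv s" using Cons.prems by auto
    have "\<Delta> [^] Suc b \<otimes> (inv s \<otimes> y) = (\<Delta> [^] b \<otimes> (\<Delta> \<otimes> inv s) \<otimes> inv (\<Delta> [^] b)) \<otimes> (\<Delta> [^] b \<otimes> y)"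
      using s yc by (simp add: gsimp)
    then have "LO (Suc b) (inv s \<otimes> y)" using psin_M[OF D_R[OF s(1)], of b] ab(2) unfolding LO_def y_def by simp
    moreover have "inv (inv s \<otimes> y) \<otimes> \<Delta> [^] a = (inv y \<otimes> \<Delta> [^] a) \<otimes> (inv (\<Delta> [^] a) \<otimes> s \<otimes> \<Delta> [^] a)"
      using s yc by (simp add: gsimp)
    then have "HI a (inv s \<otimes> y)" using phin_M[of s a] s ab(3) unfolding HI_def y_def by simp
    ultimately show ?thesis using ab(1) s unfolding y_def by (intro exI[of _ a] exI[of _ "Suc b"]) simp
  qed
qed

lemma word_exists: "x \<in> carrier G \<Longrightarrow> \<exists>xs. set xs \<subseteq> Lt \<and> lprod G xs = x"
proof -
  assume "x \<in> carrier G"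
  then have "x \<in> generate G D" using genD by simp
  then show ?thesis
  proof (induction rule: generate.induct)
    case one then show ?case by (intro exI[of _ "[]"]) simp
  next
    case (incl h) show ?case
    proof (cases "h = \<one>")
      case True then show ?thesis by (intro exI[of _ "[]"]) simp
    next
      case False then show ?thesis using incl by (intro exI[of _ "[h]"]) auto
    qed
  next
    case (inv h) show ?case
    proof (cases "h = \<one>")
      case True then show ?thesis by (intro exI[of _ "[]"]) simp
    next
      case False then show ?thesis using inv by (intro exI[of _ "[inv h]"]) auto
    qed
  next
    case (eng h1 h2)
    then obtain xs ys where "set xs \<subseteq> Lt" "lprod G xs = h1" "set ys \<subseteq> Lt" "lprod G ys = h2" by blast
    moreover have "set xs \<subseteq> carrier G" "set ys \<subseteq> carrier G" using calculation by auto
    ultimately show ?case by (intro exI[of _ "xs @ ys"]) (simp add: lprod_append)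
  qed
qed

lemma negpart: "set ys \<subseteq> D \<Longrightarrow> \<exists>zs. set zs \<subseteq> (\<lambda>s. inv s) ` D \<and> length zs = length ys \<and>
   lprod G zs = inv (\<Delta> [^] length ys) \<otimes> lprod G ys"
proof (induction ys)
  case Nil then show ?case by simp
next
  case (Cons s ys)
  then obtain zs where zs: "set zs \<subseteq> (\<lambda>s. inv s) ` D" "length zs = length ys"
    "lprod G zs = inv (\<Delta> [^] length ys) \<otimes> lprod G ys" by auto
  define b where "b = length ys"
  have sD: "s \<in> D" using Cons.prems by simp
  have Lc: "set ys \<subseteq> carrier G" using Cons.prems by auto
  define s' where "s' = inv (\<Delta> [^] b) \<otimes> s \<otimes> \<Delta> [^] b"
  have s'D: "s' \<in> D" unfolding s'_def using phin_D[OF sD] .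
  have z: "inv (inv s' \<otimes> \<Delta>) \<in> (\<lambda>s. inv s) ` D" using comp1[OF s'D] by blast
  have "inv (\<Delta> [^] Suc b) \<otimes> lprod G (s # ys) = inv (inv s' \<otimes> \<Delta>) \<otimes> (inv (\<Delta> [^] b) \<otimes> lprod G ys)"
    unfolding s'_def using sD Lc by (simp add: gsimp)
  then show ?case using zs z unfolding b_def
    by (intro exI[of _ "inv (inv s' \<otimes> \<Delta>) # zs"]) simp
qed

lemma lprod_filter: "set xs \<subseteq> carrier G \<Longrightarrow> lprod G (filter (\<lambda>z. z \<noteq> \<one>) xs) = lprod G xs"
  by (induction xs) auto

lemma word_from_interval:
  assumes x: "x \<in> carrier G" and lo: "LO b x" and hi: "HI a x"
  shows "\<exists>xs. set xs \<subseteq> Lt \<and> length xs \<le> a + b \<and> lprod G xs = x"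
proof -
  define m where "m = \<Delta> [^] b \<otimes> x"
  have mM: "m \<in> M" using lo unfolding LO_def m_def .
  have "inv m \<otimes> \<Delta> [^] (b + a) = inv x \<otimes> \<Delta> [^] a" unfolding m_def using x
    by (simp add: pow_add gsimp)
  then have "HI (b + a) m" using hi unfolding HI_def by simp
  then obtain ys where ys: "length ys = b + a" "set ys \<subseteq> D" "lprod G ys = m" using SUP mM by blast
  define ys1 where "ys1 = take b ys"
  define ys2 where "ys2 = drop b ys"
  have ys12: "ys = ys1 @ ys2" unfolding ys1_def ys2_def by simp
  have l1: "length ys1 = b" unfolding ys1_def using ys(1) by simp
  have s1: "set ys1 \<subseteq> D" "set ys2 \<subseteq> D" using ys(2) ys12 by auto
  obtain zs where zs: "set zs \<subseteq> (\<lambda>s. inv s) ` D" "length zs = b"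
    "lprod G zs = inv (\<Delta> [^] b) \<otimes> lprod G ys1" using negpart[OF s1(1)] l1 by auto
  have c1: "set ys1 \<subseteq> carrier G" "set ys2 \<subseteq> carrier G" "set zs \<subseteq> carrier G" using s1 zs(1) by auto
  have "lprod G (zs @ ys2) = inv (\<Delta> [^] b) \<otimes> lprod G ys"
    unfolding ys12 using c1 zs(3) by (simp add: lprod_append gsimp)
  also have "\<dots> = x" unfolding ys(3) m_def using x by simp
  finally have e: "lprod G (zs @ ys2) = x" .
  define ws where "ws = filter (\<lambda>z. z \<noteq> \<one>) (zs @ ys2)"
  have "lprod G ws = x" unfolding ws_def using lprod_filter[of "zs @ ys2"] c1 e by simp
  moreover have "set ws \<subseteq> Lt" unfolding ws_def using zs(1) s1(2) by auto
  moreover have "length ws \<le> a + b" unfolding ws_def using zs(2) ys(1) l1 ys12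
    by (metis length_append length_filter_le add.commute)
  ultimately show ?thesis by blast
qed

end



locale para = gars +
  fixes H N :: "'a set" and \<delta> :: 'a
  assumes ps: "parabolic_substructure G M \<Delta> H N \<delta>"
begin

abbreviation "Dd \<equiv> Div G M \<delta>"

lemma dM[simp]: "\<delta> \<in> M" using ps unfolding parabolic_substructure_def by (elim conjE)
lemma dcarr[simp]: "\<delta> \<in> carrier G" by simp
lemma Hdef: "H = generate G Dd" using ps unfolding parabolic_substructure_def by (elim conjE)
lemma Ndef: "N = mon_gen G Dd" using ps unfolding parabolic_substructure_def by (elim conjE)
lemma DdDN: "Dd = D \<inter> N" using ps unfolding parabolic_substructure_def by (elim conjE)
lemma bald: "balanced G M \<delta>" using ps unfolding parabolic_substructure_def by (elim conjE)
lemma balEqd: "DivL G M \<delta> = DivR G M \<delta>" using bald unfolding balanced_def by (rule conjunct2)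

lemma Dd_iff: "u \<in> Dd \<longleftrightarrow> u \<in> M \<and> inv u \<otimes> \<delta> \<in> M"
  unfolding Div_def DivL_def leL_def by blast
lemma Dd_M[simp]: "u \<in> Dd \<Longrightarrow> u \<in> M" using Dd_iff by blast
lemma Dd_L: "u \<in> Dd \<Longrightarrow> inv u \<otimes> \<delta> \<in> M" using Dd_iff by blast
lemma DdI: "u \<in> M \<Longrightarrow> inv u \<otimes> \<delta> \<in> M \<Longrightarrow> u \<in> Dd" using Dd_iff by blast
lemma Dd_R: assumes "u \<in> Dd" shows "\<delta> \<otimes> inv u \<in> M"
proof -
  have "u \<in> DivR G M \<delta>" using assms unfolding Div_def balEqd .
  then show ?thesis unfolding DivR_def leR_def by blast
qed
lemma DdR: assumes "u \<in> M" "\<delta> \<otimes> inv u \<in> M" shows "u \<in> Dd"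
proof -
  have "u \<in> DivR G M \<delta>" using assms unfolding DivR_def leR_def by blast
  then show ?thesis unfolding Div_def balEqd .
qed
lemma Dd_D: "u \<in> Dd \<Longrightarrow> u \<in> D" using DdDN by blast
lemma Dd_N: "u \<in> Dd \<Longrightarrow> u \<in> N" using DdDN by blast
lemma DDd: "u \<in> D \<Longrightarrow> u \<in> N \<Longrightarrow> u \<in> Dd" using DdDN by blast

lemma N_lprod: assumes "n \<in> N" shows "\<exists>us. set us \<subseteq> Dd \<and> lprod G us = n"
  using assms unfolding Ndef mon_gen_def by blast
lemma lprod_N: "set us \<subseteq> Dd \<Longrightarrow> lprod G us \<in> N"
  unfolding Ndef mon_gen_def by blast
lemma N_M[simp]: "n \<in> N \<Longrightarrow> n \<in> M"
  using N_lprod lprod_M by (metis Dd_M subset_iff)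
lemma one_N[simp]: "\<one> \<in> N" using lprod_N[of "[]"] by simp
lemma mult_N[simp]: assumes "x \<in> N" "y \<in> N" shows "x \<otimes> y \<in> N"
proof -
  obtain xs ys where "set xs \<subseteq> Dd" "lprod G xs = x" "set ys \<subseteq> Dd" "lprod G ys = y"
    using N_lprod assms by meson
  moreover have "set xs \<subseteq> carrier G" "set ys \<subseteq> carrier G" using calculation by auto
  ultimately show ?thesis using lprod_N[of "xs @ ys"] by (simp add: lprod_append)
qed
lemma d_Dd[simp]: "\<delta> \<in> Dd" by (rule DdI) simp_all
lemma dpow_N[simp]: "\<delta> [^] (k::nat) \<in> N"
proof (induction k)
  case 0 then show ?case by simp
next
  case (Suc k) then show ?case using mult_N[OF Suc.IH Dd_N[OF d_Dd]] by simp
qed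
lemma dpow_M[simp]: "\<delta> [^] (k::nat) \<in> M" by simp

lemma dcomp1: "u \<in> Dd \<Longrightarrow> inv u \<otimes> \<delta> \<in> Dd"
  by (rule DdR) (auto simp: Dd_L gsimp)
lemma dphi: assumes u: "u \<in> Dd" shows "inv \<delta> \<otimes> u \<otimes> \<delta> \<in> Dd"
proof -
  have "inv \<delta> \<otimes> u \<otimes> \<delta> = inv (inv u \<otimes> \<delta>) \<otimes> \<delta>" using u by (simp add: gsimp)
  then show ?thesis using dcomp1[OF dcomp1[OF u]] by simp
qed
lemma dphi_N: assumes "n \<in> N" shows "inv \<delta> \<otimes> n \<otimes> \<delta> \<in> N"
proof -
  obtain us where us: "set us \<subseteq> Dd" "lprod G us = n" using N_lprod[OF assms] by blast
  have "inv \<delta> \<otimes> lprod G us \<otimes> \<delta> \<in> N" using us(1)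
  proof (induction us)
    case Nil then show ?case by simp
  next
    case (Cons u us)
    have sub: "set us \<subseteq> carrier G" using Cons.prems by auto
    have "inv \<delta> \<otimes> lprod G (u # us) \<otimes> \<delta> = (inv \<delta> \<otimes> u \<otimes> \<delta>) \<otimes> (inv \<delta> \<otimes> lprod G us \<otimes> \<delta>)"
      using Cons.prems sub by (simp add: gsimp)
    then show ?case using Cons dphi[of u] Dd_N by simp
  qed
  then show ?thesis using us by simp
qed
lemma dphin_N: "n \<in> N \<Longrightarrow> inv (\<delta> [^] (k::nat)) \<otimes> n \<otimes> \<delta> [^] k \<in> N"
proof (induction k)
  case 0 then show ?case by simp
next
  case (Suc k)
  have "inv (\<delta> [^] Suc k) \<otimes> n \<otimes> \<delta> [^] Suc k = inv \<delta> \<otimes> (inv (\<delta> [^] k) \<otimes> n \<otimes> \<delta> [^] k) \<otimes> \<delta>"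
    using Suc.prems by (simp add: gsimp)
  then show ?case using dphi_N[OF Suc.IH[OF Suc.prems]] by simp
qed

lemma Dd_carr: "Dd \<subseteq> carrier G" by auto
lemma subH: "subgroup H G" unfolding Hdef by (rule generate_is_subgroup[OF Dd_carr])
lemma H_carr: "H \<subseteq> carrier G" using subH subgroup.subset by blast
lemma N_H: "n \<in> N \<Longrightarrow> n \<in> H"
proof -
  assume "n \<in> N"
  then obtain us where us: "set us \<subseteq> Dd" "lprod G us = n" using N_lprod by blast
  have "lprod G us \<in> H" using us(1)
  proof (induction us)
    case Nil then show ?case using subgroup.one_closed[OF subH] by simp
  next
    case (Cons u us) then show ?case unfolding Hdef
      by (simp add: generate.eng generate.incl)
  qed
  then show ?thesis using us by simp
qed

lemma H_form: "h \<in> H \<Longrightarrow> \<exists>n k. n \<in> N \<and> h = n \<otimes> inv (\<delta> [^] (k::nat))"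
  unfolding Hdef
proof (induction rule: generate.induct)
  case one then show ?case by (intro exI[of _ \<one>] exI[of _ 0]) simp
next
  case (incl u) then show ?case by (intro exI[of _ u] exI[of _ 0]) (simp add: Dd_N)
next
  case (inv u) then show ?case
    by (intro exI[of _ "inv u \<otimes> \<delta>"] exI[of _ 1]) (simp add: Dd_N dcomp1 gsimp)
next
  case (eng h1 h2)
  then obtain n1 k1 n2 k2 where a: "n1 \<in> N" "h1 = n1 \<otimes> inv (\<delta> [^] (k1::nat))"
    "n2 \<in> N" "h2 = n2 \<otimes> inv (\<delta> [^] (k2::nat))" by blast
  have "h1 \<otimes> h2 = (n1 \<otimes> (inv (\<delta> [^] k1) \<otimes> n2 \<otimes> \<delta> [^] k1)) \<otimes> inv (\<delta> [^] k2 \<otimes> \<delta> [^] k1)"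
    using a by (simp add: gsimp)
  also have "\<dots> = (n1 \<otimes> (inv (\<delta> [^] k1) \<otimes> n2 \<otimes> \<delta> [^] k1)) \<otimes> inv (\<delta> [^] (k2 + k1))"
    by (simp add: nat_pow_mult)
  finally show ?case using a dphin_N[of n2 k1] by (intro exI[of _ "n1 \<otimes> (inv (\<delta> [^] k1) \<otimes> n2 \<otimes> \<delta> [^] k1)"] exI[of _ "k2 + k1"]) simp
qed

lemma DC_simple: "set us \<subseteq> Dd \<Longrightarrow> a \<in> D \<Longrightarrow> lel a (lprod G us) \<Longrightarrow> a \<in> N \<and> inv a \<otimes> lprod G us \<in> N"
proof (induction us arbitrary: a)
  case Nil
  then have "inv a \<in> M" "a \<in> M" by (simp_all add: lel_iff)
  then have "a = \<one>" using MM by blast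
  then show ?case by simp
next
  case (Cons u us)
  define q where "q = lprod G us"
  have uDd: "u \<in> Dd" using Cons.prems by simp
  have uM: "u \<in> M" and uD: "u \<in> D" using uDd Dd_D by auto
  have qN: "q \<in> N" unfolding q_def using Cons.prems lprod_N by simp
  have qM: "q \<in> M" using qN by simp
  have aM: "a \<in> M" using Cons.prems by simp
  have auq: "lel a (u \<otimes> q)" using Cons.prems unfolding q_def by simp
  define c where "c = gjoin a u"
  have cc: "c \<in> carrier G" "lel a c" "lel u c" using gjoin(1,2,3)[of a u] aM uM unfolding c_def by auto
  have c1: "lel c (u \<otimes> q)" unfolding c_def
    by (rule gjoin(4)) (use aM uM qM auq lel_mult[of u q] in auto)
  have c2: "lel c \<Delta>" unfolding c_def
    by (rule gjoin(4)) (use aM uM Cons.prems(2) uD lel_Delta in auto)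
  define c' where "c' = inv u \<otimes> c"
  have c'M: "c' \<in> M" using cc(3) unfolding c'_def lel_iff .
  have cu: "c = u \<otimes> c'" unfolding c'_def using uM cc by simp
  have c'q: "lel c' q" using c1 lel_left[of u c' q] uM c'M qM cu by simp
  have "lel c' (inv u \<otimes> \<Delta>)" using c2 lel_left[of "inv u" c \<Delta>] uM cc unfolding c'_def by simp
  moreover have "lel (inv u \<otimes> \<Delta>) \<Delta>" using comp1[OF uD] lel_Delta[of "inv u \<otimes> \<Delta>"] by simp
  ultimately have "lel c' \<Delta>" using lel_trans[of c' "inv u \<otimes> \<Delta>" \<Delta>] c'M uM by simp
  then have c'D: "c' \<in> D" using lel_Delta c'M by simp
  have IH: "c' \<in> N" "inv c' \<otimes> q \<in> N" using Cons.IH[OF _ c'D] Cons.prems(1) c'q unfolding q_def by auto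
  have cN: "c \<in> N" using cu IH(1) Dd_N[OF uDd] by simp
  have cM: "c \<in> M" using cN by simp
  have cD: "c \<in> D" using c2 lel_Delta cM by simp
  have cDd: "c \<in> Dd" using DDd cD cN by simp
  have cd: "lel c \<delta>" using Dd_L[OF cDd] unfolding lel_iff .
  have "lel a \<delta>" using lel_trans[OF cc(2) cd] aM cc by simp
  then have aDd: "a \<in> Dd" using DdI aM unfolding lel_iff by simp
  have acM: "inv a \<otimes> c \<in> M" using cc(2) unfolding lel_iff .
  have "lel (inv a \<otimes> c) (inv a \<otimes> \<delta>)" using lel_left[of "inv a" c \<delta>] cd aM cc by simp
  moreover have "lel (inv a \<otimes> \<delta>) \<delta>" using Dd_L[OF dcomp1[OF aDd]] unfolding lel_iff .
  ultimately have "lel (inv a \<otimes> c) \<delta>" using lel_trans[of "inv a \<otimes> c" "inv a \<otimes> \<delta>" \<delta>] aM cc by simp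
  then have acDd: "inv a \<otimes> c \<in> Dd" using DdI acM unfolding lel_iff by simp
  have "inv a \<otimes> (u \<otimes> q) = (inv a \<otimes> c) \<otimes> (inv c' \<otimes> q)"
    unfolding cu using aM uM c'M qM by (simp add: gsimp)
  then show ?case using Dd_N[OF aDd] Dd_N[OF acDd] IH(2) unfolding q_def by simp
qed

lemma DC: assumes "x \<in> M" "p \<in> N" "lel x p" shows "x \<in> N \<and> inv x \<otimes> p \<in> N"
proof -
  obtain as where as: "set as \<subseteq> D" "lprod G as = x" using M_lprod[OF assms(1)] by blast
  have "\<forall>p. p \<in> N \<longrightarrow> lel (lprod G as) p \<longrightarrow> lprod G as \<in> N \<and> inv (lprod G as) \<otimes> p \<in> N"
    using as(1)
  proof (induction as)
    case Nil then show ?case by simp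
  next
    case (Cons a rest)
    show ?case
    proof (intro allI impI)
      fix p assume p: "p \<in> N" "lel (lprod G (a # rest)) p"
      define r where "r = lprod G rest"
      have aD: "a \<in> D" using Cons.prems by simp
      have rM: "r \<in> M" unfolding r_def using Cons.prems by (intro lprod_M) auto
      have pM: "p \<in> M" using p by simp
      have "lel a (a \<otimes> r)" using lel_mult[of a r] aD rM by simp
      then have ap: "lel a p" using lel_trans[of a "a \<otimes> r" p] p aD rM unfolding r_def by simp
      obtain us where us: "set us \<subseteq> Dd" "lprod G us = p" using N_lprod[OF p(1)] by blast
      have A: "a \<in> N" "inv a \<otimes> p \<in> N" using DC_simple[OF us(1) aD] ap us(2) by auto
      have "lel (a \<otimes> r) (a \<otimes> (inv a \<otimes> p))" using p aD rM unfolding r_def by simp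
      then have "lel r (inv a \<otimes> p)" using lel_left[of a r "inv a \<otimes> p"] aD rM pM by simp
      then have B: "r \<in> N" "inv r \<otimes> (inv a \<otimes> p) \<in> N" using Cons.IH Cons.prems A(2) unfolding r_def by auto
      have "inv (a \<otimes> r) \<otimes> p = inv r \<otimes> (inv a \<otimes> p)" using aD rM pM by (simp add: gsimp)
      then show "lprod G (a # rest) \<in> N \<and> inv (lprod G (a # rest)) \<otimes> p \<in> N"
        using A B unfolding r_def by simp
    qed
  qed
  then show ?thesis using assms as by blast
qed

definition red where "red x \<longleftrightarrow> (\<forall>u\<in>Dd. lel u x \<longrightarrow> u = \<one>)"

lemma red_N: assumes "red x" "x \<in> carrier G" "g \<in> N" "lel g x" shows "g = \<one>"
proof -
  obtain us where us: "set us \<subseteq> Dd" "lprod G us = g" using N_lprod[OF assms(3)] by blast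
  have "lel (lprod G us) x \<Longrightarrow> lprod G us = \<one>" using us(1)
  proof (induction us)
    case Nil then show ?case by simp
  next
    case (Cons u us)
    have uDd: "u \<in> Dd" using Cons.prems by simp
    have gM: "lprod G us \<in> M" using Cons.prems by (intro lprod_M) auto
    have "lel u (u \<otimes> lprod G us)" using lel_mult[of u "lprod G us"] uDd gM by simp
    then have "lel u x" using lel_trans[of u "u \<otimes> lprod G us" x] Cons.prems assms(2) uDd gM by simp
    then have "u = \<one>" using assms(1) uDd unfolding red_def by blast
    then show ?case using Cons gM by simp
  qed
  then show ?thesis using us assms(4) by simp
qed

lemma red_exists_aux:
  "x \<in> M \<Longrightarrow> (\<forall>xs. set xs \<subseteq> M - {\<one>} \<and> lprod G xs = x \<longrightarrow> length xs \<le> K) \<Longrightarrow>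
   \<exists>n x0. n \<in> N \<and> x0 \<in> M \<and> red x0 \<and> x = n \<otimes> x0"
proof (induction K arbitrary: x rule: less_induct)
  case (less K)
  show ?case
  proof (cases "red x")
    case True then show ?thesis using less.prems by (intro exI[of _ \<one>] exI[of _ x]) simp
  next
    case False
    then obtain u where u: "u \<in> Dd" "lel u x" "u \<noteq> \<one>" unfolding red_def by blast
    define x' where "x' = inv u \<otimes> x"
    have x'M: "x' \<in> M" using u(2) unfolding x'_def lel_iff .
    have xu: "x = u \<otimes> x'" unfolding x'_def using u less.prems by simp
    have uM: "u \<in> M" using u by simp
    have bound: "length xs < K" if "set xs \<subseteq> M - {\<one>}" "lprod G xs = x'" for xs
    proof -
      have "set (u # xs) \<subseteq> M - {\<one>}" "lprod G (u # xs) = x" using that u xu by auto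
      then have "length (u # xs) \<le> K" using less.prems(2) by blast
      then show ?thesis by simp
    qed
    obtain ys where ys: "set ys \<subseteq> M - {\<one>}" "lprod G ys = x'"
    proof (cases "x' = \<one>")
      case True then show ?thesis using that[of "[]"] by simp
    next
      case False then show ?thesis using that[of "[x']"] x'M by simp
    qed
    have "length ys < K" using bound[OF ys] .
    then have Kpos: "K - 1 < K" by simp
    have "\<forall>xs. set xs \<subseteq> M - {\<one>} \<and> lprod G xs = x' \<longrightarrow> length xs \<le> K - 1"
      using bound by fastforce
    then obtain n x0 where n: "n \<in> N" "x0 \<in> M" "red x0" "x' = n \<otimes> x0"
      using less.IH[OF Kpos x'M] by blast
    have "x = (u \<otimes> n) \<otimes> x0" using xu n uM by (simp add: m_assoc)
    then show ?thesis using n Dd_N[OF u(1)] by (intro exI[of _ "u \<otimes> n"] exI[of _ x0]) simp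
  qed
qed

lemma red_exists: "x \<in> M \<Longrightarrow> \<exists>n x0. n \<in> N \<and> x0 \<in> M \<and> red x0 \<and> x = n \<otimes> x0"
  using red_exists_aux noeth unfolding noetherian_def by blast

lemma red_unique:
  assumes x0: "x0 \<in> M" "red x0" and x1: "x1 \<in> M" "red x1" and h: "h \<in> H" "x1 = h \<otimes> x0"
  shows "h = \<one>"
proof -
  obtain n k where nk: "n \<in> N" "h = n \<otimes> inv (\<delta> [^] (k::nat))" using H_form[OF h(1)] by blast
  have hc: "h \<in> carrier G" using h H_carr by blast
  have hd: "h \<otimes> \<delta> [^] k = n" using nk by (simp add: gsimp)
  have l1: "lel (inv h) (\<delta> [^] k)" unfolding lel_iff using hd nk hc by simp
  have l2: "lel (inv h) x0" unfolding lel_iff using h x1 hc by simp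
  define g where "g = gmeet (\<delta> [^] k) x0"
  have gM: "g \<in> M" unfolding g_def using meet_M x0 by simp
  have g1: "lel (inv h) g" unfolding g_def by (rule gmeet(4)) (use l1 l2 x0 hc in auto)
  have "lel g (\<delta> [^] k)" unfolding g_def using gmeet(2)[of "\<delta> [^] k" x0] x0 by simp
  then have gN: "g \<in> N" using DC[OF gM dpow_N] by blast
  have "lel g x0" unfolding g_def using gmeet(3)[of "\<delta> [^] k" x0] x0 by simp
  then have "g = \<one>" using red_N[OF x0(2) _ gN] x0 by simp
  then have hM: "h \<in> M" using g1 hc unfolding lel_iff by simp
  have "lel h n" unfolding lel_iff using hd[symmetric] hc by simp
  then have hN: "h \<in> N" using DC[OF hM nk(1)] by blast
  have "lel h x1" unfolding lel_iff using h hc x0 by simp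
  then show ?thesis using red_N[OF x1(2) _ hN] x1 by simp
qed

lemma red_HI:
  assumes x0: "x0 \<in> M" "red x0" and h: "h \<in> H" and hi: "HI w (h \<otimes> x0)"
  shows "HI w x0"
proof -
  have hc: "h \<in> carrier G" using h H_carr by blast
  have ih: "inv h \<in> H" using subgroup.m_inv_closed[OF subH h] .
  obtain n k where nk: "n \<in> N" "inv h = n \<otimes> inv (\<delta> [^] (k::nat))" using H_form[OF ih] by blast
  define z where "z = \<Delta> [^] w \<otimes> inv x0"
  have zc: "z \<in> carrier G" unfolding z_def using x0 by simp
  have "z \<otimes> inv h = \<Delta> [^] w \<otimes> (inv (h \<otimes> x0) \<otimes> \<Delta> [^] w) \<otimes> inv (\<Delta> [^] w)"
    unfolding z_def using hc x0 by (simp add: gsimp)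
  then have zh: "z \<otimes> inv h \<in> M" using psin_M[of "inv (h \<otimes> x0) \<otimes> \<Delta> [^] w" w] hi unfolding HI_def by simp
  have "z \<otimes> n = (z \<otimes> inv h) \<otimes> \<delta> [^] k" using nk zc by (simp add: gsimp)
  then have znM: "z \<otimes> n \<in> M" using zh by simp
  have l1: "lel (inv z) n" unfolding lel_iff using znM zc by simp
  have l2: "lel (inv z) x0" unfolding lel_iff z_def using x0 by (simp add: gsimp)
  define g where "g = gmeet n x0"
  have gM: "g \<in> M" unfolding g_def using meet_M x0 nk by simp
  have g1: "lel (inv z) g" unfolding g_def by (rule gmeet(4)) (use l1 l2 x0 nk zc in auto)
  have "lel g n" unfolding g_def using gmeet(2)[of n x0] x0 nk by simp
  then have gN: "g \<in> N" using DC[OF gM nk(1)] by blast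
  have "lel g x0" unfolding g_def using gmeet(3)[of n x0] x0 nk by simp
  then have "g = \<one>" using red_N[OF x0(2) _ gN] x0 by simp
  then have zM: "z \<in> M" using g1 zc unfolding lel_iff by simp
  have "inv x0 \<otimes> \<Delta> [^] w = inv (\<Delta> [^] w) \<otimes> z \<otimes> \<Delta> [^] w" unfolding z_def using x0 by (simp add: gsimp)
  then show ?thesis unfolding HI_def using phin_M[OF zM, of w] by simp
qed

lemma red_hd: assumes x: "x \<in> M" shows "red x \<longleftrightarrow> red (hdD x)"
proof -
  have "lel u x \<longleftrightarrow> lel u (hdD x)" if u: "u \<in> Dd" for u
  proof
    assume "lel u x"
    then show "lel u (hdD x)" using hd_glb[OF x, of u] u Dd_D lel_Delta by simp
  next
    assume "lel u (hdD x)"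
    then show "lel u x" using lel_trans[OF _ hd_le[OF x]] u x by simp
  qed
  then show ?thesis unfolding red_def by blast
qed

end



context para begin

definition R where "R w = {x \<in> M. HI w x \<and> red x}"
definition B where "B b a = {C \<in> rcosets H. \<exists>x\<in>C. LO b x \<and> HI a x}"

lemma HIset_fin: "finite {x \<in> M. HI w x}"
proof -
  have "{x \<in> M. HI w x} \<subseteq> lprod G ` {xs. set xs \<subseteq> D \<and> length xs = w}"
    using SUP by blast
  moreover have "finite {xs. set xs \<subseteq> D \<and> length xs = w}" using finite_lists_length_eq[OF finD] .
  ultimately show ?thesis using finite_surj by blast
qed

lemma R_fin: "finite (R w)"
  using HIset_fin unfolding R_def by (rule rev_finite_subset) blast

lemma rc_in: "x \<in> carrier G \<Longrightarrow> H #> x \<in> rcosets H" using rcosetsI[OF H_carr] .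
lemma rc_self: "x \<in> carrier G \<Longrightarrow> x \<in> H #> x" using rcos_self[OF _ subH] .
lemma rc_cases: "C \<in> rcosets H \<Longrightarrow> \<exists>\<beta>\<in>carrier G. C = H #> \<beta>" unfolding RCOSETS_def by blast
lemma rc_carr: "C \<in> rcosets H \<Longrightarrow> C \<subseteq> carrier G"
  using subgroup.rcosets_carrier[OF subH is_group] by blast
lemma rc_mem: "C \<in> rcosets H \<Longrightarrow> x \<in> C \<Longrightarrow> C = H #> x"
  using rc_cases repr_independence[OF _ _ subH] by blast
lemma rc_diff: "C \<in> rcosets H \<Longrightarrow> x \<in> C \<Longrightarrow> y \<in> C \<Longrightarrow> y \<otimes> inv x \<in> H"
proof -
  assume a: "C \<in> rcosets H" "x \<in> C" "y \<in> C"
  then have "C = H #> x" using rc_mem by blast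
  moreover have "x \<in> carrier G" using a rc_carr by blast
  ultimately show ?thesis using subgroup.rcos_module_imp[OF subH is_group] a by blast
qed
lemma rc_left: "C \<in> rcosets H \<Longrightarrow> x \<in> C \<Longrightarrow> h \<in> H \<Longrightarrow> h \<otimes> x \<in> C"
proof -
  assume a: "C \<in> rcosets H" "x \<in> C" "h \<in> H"
  then have "C = H #> x" using rc_mem by blast
  moreover have "x \<in> carrier G" using a rc_carr by blast
  ultimately show ?thesis using rcosI[OF a(3) H_carr] by simp
qed
lemma rc_shift: "C \<in> rcosets H \<Longrightarrow> g \<in> carrier G \<Longrightarrow> C #> g \<in> rcosets H"
proof -
  assume a: "C \<in> rcosets H" "g \<in> carrier G"
  then obtain \<beta> where "\<beta> \<in> carrier G" "C = H #> \<beta>" using rc_cases by blast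
  then show ?thesis using coset_mult_assoc[OF H_carr] a rc_in by simp
qed
lemma rc_shift_mem: "x \<in> C \<Longrightarrow> x \<otimes> g \<in> C #> g" unfolding r_coset_def by blast
lemma rc_shift_back: "C \<in> rcosets H \<Longrightarrow> g \<in> carrier G \<Longrightarrow> (C #> g) #> inv g = C"
proof -
  assume a: "C \<in> rcosets H" "g \<in> carrier G"
  have "(C #> g) #> inv g = C #> (g \<otimes> inv g)" using coset_mult_assoc[OF rc_carr[OF a(1)]] a by simp
  then show ?thesis using a rc_carr[OF a(1)] by simp
qed

lemma LO0': "x \<in> carrier G \<Longrightarrow> LO 0 x \<longleftrightarrow> x \<in> M" unfolding LO_def by simp
lemma B0_def: "B 0 w = {C \<in> rcosets H. \<exists>x\<in>C. x \<in> M \<and> HI w x}"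
  unfolding B_def using LO0' rc_carr by blast

lemma shift_fwd_LO: "x \<in> carrier G \<Longrightarrow> LO b x \<Longrightarrow> x \<otimes> \<Delta> [^] b \<in> M"
proof -
  assume a: "x \<in> carrier G" "LO b x"
  have "x \<otimes> \<Delta> [^] b = inv (\<Delta> [^] b) \<otimes> (\<Delta> [^] b \<otimes> x) \<otimes> \<Delta> [^] b" using a by (simp add: gsimp)
  then show ?thesis using phin_M[of "\<Delta> [^] b \<otimes> x" b] a unfolding LO_def by simp
qed
lemma shift_fwd_HI: "x \<in> carrier G \<Longrightarrow> HI a x \<Longrightarrow> HI (a + b) (x \<otimes> \<Delta> [^] b)"
proof -
  assume a: "x \<in> carrier G" "HI a x"
  have "inv (x \<otimes> \<Delta> [^] b) \<otimes> \<Delta> [^] (a + b) = inv (\<Delta> [^] b) \<otimes> (inv x \<otimes> \<Delta> [^] a) \<otimes> \<Delta> [^] b"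
    using a by (simp add: gsimp pow_add)
  then show ?thesis using phin_M[of "inv x \<otimes> \<Delta> [^] a" b] a unfolding HI_def by simp
qed
lemma shift_back: "y \<in> M \<Longrightarrow> HI (a + b) y \<Longrightarrow> LO b (y \<otimes> inv (\<Delta> [^] b)) \<and> HI a (y \<otimes> inv (\<Delta> [^] b))"
proof -
  assume a: "y \<in> M" "HI (a + b) y"
  have "LO b (y \<otimes> inv (\<Delta> [^] b))" unfolding LO_def using psin_M[OF a(1), of b] a(1) by (simp add: gsimp)
  moreover have "inv (y \<otimes> inv (\<Delta> [^] b)) \<otimes> \<Delta> [^] a = \<Delta> [^] b \<otimes> (inv y \<otimes> \<Delta> [^] (a + b)) \<otimes> inv (\<Delta> [^] b)"
    using a by (simp add: gsimp pow_add)
  then have "HI a (y \<otimes> inv (\<Delta> [^] b))" using psin_M[of "inv y \<otimes> \<Delta> [^] (a + b)" b] a unfolding HI_def by simp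
  ultimately show ?thesis by blast
qed

lemma B0_img: "B 0 w = (\<lambda>x. H #> x) ` R w"
proof
  show "B 0 w \<subseteq> (\<lambda>x. H #> x) ` R w"
  proof
    fix C assume "C \<in> B 0 w"
    then obtain x where C: "C \<in> rcosets H" "x \<in> C" "x \<in> M" "HI w x" unfolding B0_def by blast
    obtain n x0 where n: "n \<in> N" "x0 \<in> M" "red x0" "x = n \<otimes> x0" using red_exists[OF C(3)] by blast
    have "HI w x0" using red_HI[OF n(2,3) N_H[OF n(1)]] C(4) n(4) by simp
    then have "x0 \<in> R w" unfolding R_def using n by simp
    moreover have "x0 \<in> C"
    proof -
      have "inv n \<otimes> x = x0" using n by simp
      moreover have "inv n \<in> H" using subgroup.m_inv_closed[OF subH N_H[OF n(1)]] .
      ultimately show ?thesis using rc_left[OF C(1,2)] by metis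
    qed
    then have "C = H #> x0" using rc_mem C by blast
    ultimately show "C \<in> (\<lambda>x. H #> x) ` R w" by blast
  qed
next
  show "(\<lambda>x. H #> x) ` R w \<subseteq> B 0 w"
  proof
    fix C assume "C \<in> (\<lambda>x. H #> x) ` R w"
    then obtain x where x: "x \<in> M" "HI w x" "C = H #> x" unfolding R_def by blast
    have "C \<in> rcosets H" "x \<in> C" using rc_in[of x] rc_self[of x] x by auto
    then show "C \<in> B 0 w" unfolding B0_def using x by blast
  qed
qed

lemma B0_inj: "inj_on (\<lambda>x. H #> x) (R w)"
proof
  fix x0 x1 assume a: "x0 \<in> R w" "x1 \<in> R w" "H #> x0 = H #> x1"
  then have x: "x0 \<in> M" "red x0" "x1 \<in> M" "red x1" unfolding R_def by auto
  have "x1 \<in> H #> x0" using a(3) rc_self[of x1] x by simp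
  then obtain h where h: "h \<in> H" "x1 = h \<otimes> x0" unfolding r_coset_def by blast
  then have "h = \<one>" using red_unique x by blast
  then show "x0 = x1" using h x by simp
qed

lemma B_shift: "B b a = (\<lambda>C. C #> inv (\<Delta> [^] b)) ` B 0 (a + b)"
proof
  show "B b a \<subseteq> (\<lambda>C. C #> inv (\<Delta> [^] b)) ` B 0 (a + b)"
  proof
    fix C assume "C \<in> B b a"
    then obtain x where C: "C \<in> rcosets H" "x \<in> C" "LO b x" "HI a x" unfolding B_def by blast
    have xc: "x \<in> carrier G" using C rc_carr by blast
    have "C #> \<Delta> [^] b \<in> B 0 (a + b)" unfolding B0_def
      using rc_shift[OF C(1)] rc_shift_mem[OF C(2)] shift_fwd_LO[OF xc C(3)] shift_fwd_HI[OF xc C(4)] by auto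
    moreover have "C = (C #> \<Delta> [^] b) #> inv (\<Delta> [^] b)" using rc_shift_back[OF C(1)] by simp
    ultimately show "C \<in> (\<lambda>C. C #> inv (\<Delta> [^] b)) ` B 0 (a + b)" by blast
  qed
next
  show "(\<lambda>C. C #> inv (\<Delta> [^] b)) ` B 0 (a + b) \<subseteq> B b a"
  proof
    fix C assume "C \<in> (\<lambda>C. C #> inv (\<Delta> [^] b)) ` B 0 (a + b)"
    then obtain C' y where C': "C' \<in> rcosets H" "y \<in> C'" "y \<in> M" "HI (a + b) y" "C = C' #> inv (\<Delta> [^] b)"
      unfolding B0_def by blast
    then show "C \<in> B b a" unfolding B_def
      using rc_shift[OF C'(1)] rc_shift_mem[OF C'(2)] shift_back[OF C'(3,4)] by auto
  qed
qed

lemma shift_inj: "inj_on (\<lambda>C. C #> inv (\<Delta> [^] (b::nat))) (rcosets H)"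
proof
  fix C1 C2 assume a: "C1 \<in> rcosets H" "C2 \<in> rcosets H" "C1 #> inv (\<Delta> [^] b) = C2 #> inv (\<Delta> [^] b)"
  have i: "inv (\<Delta> [^] b) \<in> carrier G" by simp
  have "C1 = (C1 #> inv (\<Delta> [^] b)) #> inv (inv (\<Delta> [^] b))" using rc_shift_back[OF a(1) i] by (rule sym)
  also have "\<dots> = C2" using a(3) rc_shift_back[OF a(2) i] by (simp only:)
  finally show "C1 = C2" .
qed

definition cR where "cR w = card (R w)"

lemma B0_sub: "B 0 w \<subseteq> rcosets H" unfolding B_def by blast

lemma card_B: "card (B b a) = cR (a + b)" and fin_B: "finite (B b a)"
proof -
  have "card (B 0 (a + b)) = cR (a + b)" unfolding B0_img[of "a + b"] cR_def using card_image[OF B0_inj] .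
  moreover have "finite (B 0 (a + b))" unfolding B0_img[of "a + b"] using R_fin by (rule finite_imageI)
  moreover have "card (B b a) = card (B 0 (a + b))" unfolding B_shift[of b a]
    using card_image[OF inj_on_subset[OF shift_inj B0_sub]] .
  moreover have "finite (B b a)" unfolding B_shift[of b a] using calculation(2) by (rule finite_imageI)
  ultimately show "card (B b a) = cR (a + b)" "finite (B b a)" by simp_all
qed

lemma claim:
  assumes C: "C \<in> rcosets H" and x: "x \<in> C" "LO b x" and y: "y \<in> C" "HI a y"
  shows "C \<in> B b a"
proof -
  have xc: "x \<in> carrier G" and yc: "y \<in> carrier G" using C x y rc_carr by auto
  have xbM: "x \<otimes> \<Delta> [^] b \<in> M" using shift_fwd_LO[OF xc x(2)] .
  obtain n x0 where n: "n \<in> N" "x0 \<in> M" "red x0" "x \<otimes> \<Delta> [^] b = n \<otimes> x0" using red_exists[OF xbM] by blast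
  have nc: "n \<in> carrier G" using n by simp
  have x0e: "x0 = inv n \<otimes> x \<otimes> \<Delta> [^] b" using n xc by (simp add: gsimp)
  have hy: "HI (a + b) (y \<otimes> \<Delta> [^] b)" using shift_fwd_HI[OF yc y(2)] .
  define h where "h = (y \<otimes> inv x) \<otimes> n"
  have hH: "h \<in> H" unfolding h_def using rc_diff[OF C x(1) y(1)] N_H[OF n(1)] subgroup.m_closed[OF subH] by blast
  have "y \<otimes> \<Delta> [^] b = h \<otimes> x0" unfolding h_def x0e using xc yc nc by (simp add: gsimp)
  then have "HI (a + b) x0" using red_HI[OF n(2,3) hH] hy by simp
  then have z: "LO b (x0 \<otimes> inv (\<Delta> [^] b)) \<and> HI a (x0 \<otimes> inv (\<Delta> [^] b))" using shift_back n by blast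
  have "x0 \<otimes> inv (\<Delta> [^] b) = inv n \<otimes> x" unfolding x0e using xc nc by (simp add: gsimp)
  moreover have "inv n \<otimes> x \<in> C" using rc_left[OF C x(1)] subgroup.m_inv_closed[OF subH N_H[OF n(1)]] by blast
  ultimately show ?thesis unfolding B_def using C z by auto
qed

end



context para begin

lemma wl_le:
  assumes y: "y \<in> carrier G"
  shows "word_length G S y \<le> n \<longleftrightarrow> (\<exists>xs. set xs \<subseteq> Lt \<and> length xs \<le> n \<and> lprod G xs = y)"
proof
  assume a: "word_length G S y \<le> n"
  obtain xs0 where xs0: "set xs0 \<subseteq> Lt" "lprod G xs0 = y" using word_exists[OF y] by blast
  have "\<exists>k xs. length xs = k \<and> set xs \<subseteq> Lt \<and> lprod G xs = y" using xs0 by blast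
  from LeastI_ex[OF this] obtain xs where
    "length xs = word_length G S y" "set xs \<subseteq> Lt" "lprod G xs = y"
    unfolding word_length_def by blast
  then show "\<exists>xs. set xs \<subseteq> Lt \<and> length xs \<le> n \<and> lprod G xs = y" using a by (metis order_refl)
next
  assume "\<exists>xs. set xs \<subseteq> Lt \<and> length xs \<le> n \<and> lprod G xs = y"
  then obtain xs where xs: "set xs \<subseteq> Lt" "length xs \<le> n" "lprod G xs = y" by blast
  have "word_length G S y \<le> length xs" unfolding word_length_def
    by (rule Least_le) (use xs in blast)
  then show "word_length G S y \<le> n" using xs by simp
qed

lemma cl_le:
  assumes C: "C \<in> rcosets H"
  shows "coset_length G S C \<le> n \<longleftrightarrow> (\<exists>y\<in>C. word_length G S y \<le> n)"
proof
  assume a: "coset_length G S C \<le> n"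
  obtain y0 where "y0 \<in> C" using subgroup.rcosets_non_empty[OF subH C] by blast
  then have "\<exists>k. \<exists>\<beta>\<in>C. word_length G S \<beta> = k" by blast
  from LeastI_ex[OF this] obtain \<beta> where b: "\<beta> \<in> C" "word_length G S \<beta> = coset_length G S C"
    unfolding coset_length_def by blast
  have "word_length G S \<beta> \<le> n" using a b(2) by linarith
  then show "\<exists>y\<in>C. word_length G S y \<le> n" using b(1) by blast
next
  assume "\<exists>y\<in>C. word_length G S y \<le> n"
  then obtain y where y: "y \<in> C" "word_length G S y \<le> n" by blast
  have "coset_length G S C \<le> word_length G S y" unfolding coset_length_def
    by (rule Least_le) (use y in blast)
  then show "coset_length G S C \<le> n" using y by simp
qed

lemma len_union: "{C \<in> rcosets H. coset_length G S C \<le> n} = (\<Union>b\<in>{..n}. B b (n - b))"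
proof
  show "{C \<in> rcosets H. coset_length G S C \<le> n} \<subseteq> (\<Union>b\<in>{..n}. B b (n - b))"
  proof
    fix C assume "C \<in> {C \<in> rcosets H. coset_length G S C \<le> n}"
    then have C: "C \<in> rcosets H" "coset_length G S C \<le> n" by auto
    then obtain y where y: "y \<in> C" "word_length G S y \<le> n" using cl_le by blast
    have yc: "y \<in> carrier G" using C y rc_carr by blast
    obtain xs where xs: "set xs \<subseteq> Lt" "length xs \<le> n" "lprod G xs = y" using wl_le[OF yc] y by blast
    obtain a b where ab: "a + b = length xs" "LO b y" "HI a y" using word_bound[OF xs(1)] xs(3) by blast
    have "HI (n - b) y" using HI_mono[OF ab(3) yc] ab xs by simp
    then have "C \<in> B b (n - b)" unfolding B_def using C y ab by blast
    moreover have "b \<le> n" using ab xs by simp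
    ultimately show "C \<in> (\<Union>b\<in>{..n}. B b (n - b))" by blast
  qed
next
  show "(\<Union>b\<in>{..n}. B b (n - b)) \<subseteq> {C \<in> rcosets H. coset_length G S C \<le> n}"
  proof
    fix C assume "C \<in> (\<Union>b\<in>{..n}. B b (n - b))"
    then obtain b x where bx: "b \<le> n" "C \<in> rcosets H" "x \<in> C" "LO b x" "HI (n - b) x" unfolding B_def by blast
    have xc: "x \<in> carrier G" using bx rc_carr by blast
    obtain xs where xs: "set xs \<subseteq> Lt" "length xs \<le> n - b + b" "lprod G xs = x"
      using word_from_interval[OF xc bx(4,5)] by blast
    have "word_length G S x \<le> n" using wl_le[OF xc] xs bx(1) by auto
    then show "C \<in> {C \<in> rcosets H. coset_length G S C \<le> n}" using cl_le[OF bx(2)] bx by blast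
  qed
qed

definition U where "U n k = (\<Union>b\<in>{..k}. B b (n - b))"

lemma U_fin: "finite (U n k)" unfolding U_def using fin_B by simp

lemma U_card: "k \<le> n \<Longrightarrow> card (U n k) + k * cR (n - 1) = Suc k * cR n"
proof (induction k)
  case 0
  have "U n 0 = B 0 n" unfolding U_def by simp
  then show ?case using card_B[of 0 n] by simp
next
  case (Suc k)
  have Ueq: "U n (Suc k) = U n k \<union> B (Suc k) (n - Suc k)" unfolding U_def
    by (simp add: atMost_Suc Un_commute)
  have Ieq: "U n k \<inter> B (Suc k) (n - Suc k) = B k (n - Suc k)"
  proof
    show "U n k \<inter> B (Suc k) (n - Suc k) \<subseteq> B k (n - Suc k)"
    proof
      fix C assume "C \<in> U n k \<inter> B (Suc k) (n - Suc k)"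
      then obtain b x y where a: "b \<le> k" "C \<in> rcosets H" "x \<in> C" "LO b x" "y \<in> C" "HI (n - Suc k) y"
        unfolding U_def B_def by blast
      have "LO k x" using LO_mono[OF a(4)] a rc_carr by blast
      then show "C \<in> B k (n - Suc k)" using claim[OF a(2,3) _ a(5,6)] by blast
    qed
  next
    show "B k (n - Suc k) \<subseteq> U n k \<inter> B (Suc k) (n - Suc k)"
    proof
      fix C assume "C \<in> B k (n - Suc k)"
      then obtain x where a: "C \<in> rcosets H" "x \<in> C" "LO k x" "HI (n - Suc k) x" unfolding B_def by blast
      have xc: "x \<in> carrier G" using a rc_carr by blast
      have "HI (n - k) x" using HI_mono[OF a(4) xc] by simp
      then have "C \<in> B k (n - k)" unfolding B_def using a by blast
      then have "C \<in> U n k" unfolding U_def by blast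
      moreover have "LO (Suc k) x" using LO_mono[OF a(3) xc] by simp
      then have "C \<in> B (Suc k) (n - Suc k)" unfolding B_def using a by blast
      ultimately show "C \<in> U n k \<inter> B (Suc k) (n - Suc k)" by blast
    qed
  qed
  have cu: "card (U n k) + card (B (Suc k) (n - Suc k)) = card (U n (Suc k)) + card (B k (n - Suc k))"
    using card_Un_Int[OF U_fin[of n k] fin_B[of "Suc k" "n - Suc k"]] unfolding Ueq Ieq by simp
  have c1: "card (B (Suc k) (n - Suc k)) = cR n" using card_B Suc.prems by simp
  have c2: "card (B k (n - Suc k)) = cR (n - 1)" using card_B Suc.prems
    by (metis Nat.add_diff_assoc2 Suc_leD add_Suc_right diff_Suc_1 le_add_diff_inverse2)
  have IH: "card (U n k) + k * cR (n - 1) = Suc k * cR n" using Suc by simp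
  show ?case using cu c1 c2 IH by simp
qed

definition Lc where "Lc n = card {C \<in> rcosets H. coset_length G S C \<le> n}"

lemma Lc_eq: "Lc n + n * cR (n - 1) = Suc n * cR n"
  using U_card[of n n] unfolding Lc_def len_union U_def by simp

lemma Lc_fin: "finite {C \<in> rcosets H. coset_length G S C \<le> n}"
  unfolding len_union using U_fin unfolding U_def by simp

lemma count_eq0: "coset_count G H S 0 = Lc 0"
  unfolding coset_count_def Lc_def by simp

lemma count_eqS: "coset_count G H S (Suc m) = Lc (Suc m) - Lc m" and Lc_mono: "Lc m \<le> Lc (Suc m)"
proof -
  have e: "{C \<in> rcosets H. coset_length G S C = Suc m} =
    {C \<in> rcosets H. coset_length G S C \<le> Suc m} - {C \<in> rcosets H. coset_length G S C \<le> m}" by auto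
  have s: "{C \<in> rcosets H. coset_length G S C \<le> m} \<subseteq> {C \<in> rcosets H. coset_length G S C \<le> Suc m}" by auto
  show "coset_count G H S (Suc m) = Lc (Suc m) - Lc m" unfolding coset_count_def Lc_def e
    using card_Diff_subset[OF rev_finite_subset[OF Lc_fin s] s] by simp
  show "Lc m \<le> Lc (Suc m)" unfolding Lc_def using card_mono[OF Lc_fin s] .
qed

definition cnt where "cnt w s = card {x \<in> M. HI w x \<and> hdD x = s}"

lemma cnt_fin: "finite {x \<in> M. HI w x \<and> P x}"
  using HIset_fin by (rule rev_finite_subset) blast

lemma cR_sum: "cR w = (\<Sum>s\<in>{s\<in>D. red s}. cnt w s)"
proof -
  have "R w = (\<Union>s\<in>{s\<in>D. red s}. {x \<in> M. HI w x \<and> hdD x = s})"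
    unfolding R_def using red_hd hd_D by auto
  then have "card (R w) = (\<Sum>s\<in>{s\<in>D. red s}. card {x \<in> M. HI w x \<and> hdD x = s})"
    using card_UN_disjoint[of "{s\<in>D. red s}" "\<lambda>s. {x \<in> M. HI w x \<and> hdD x = s}"] finD cnt_fin by auto
  then show ?thesis unfolding cR_def cnt_def .
qed

lemma cnt_Suc:
  assumes s: "s \<in> D"
  shows "cnt (Suc w) s = (\<Sum>s'\<in>D. (if hdD (s \<otimes> s') = s then 1 else 0) * cnt w s')"
proof -
  let ?A = "{x \<in> M. HI (Suc w) x \<and> hdD x = s}"
  let ?B = "{x' \<in> M. HI w x' \<and> hdD (s \<otimes> hdD x') = s}"
  have sc: "s \<in> carrier G" using s by simp
  have img: "?A = (\<lambda>x'. s \<otimes> x') ` ?B"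
  proof
    show "?A \<subseteq> (\<lambda>x'. s \<otimes> x') ` ?B"
    proof
      fix x assume x: "x \<in> ?A"
      define x' where "x' = inv s \<otimes> x"
      have xM: "x \<in> M" using x by simp
      have x'M: "x' \<in> M" unfolding x'_def using hd_le[OF xM] x unfolding lel_iff by simp
      have "HI w x'" unfolding x'_def using SUP_step[OF xM] x by simp
      moreover have "hdD (s \<otimes> hdD x') = s"
        using HL[OF D_M[OF s] x'M] x xM sc unfolding x'_def by simp
      moreover have "x = s \<otimes> x'" unfolding x'_def using xM sc by simp
      ultimately show "x \<in> (\<lambda>x'. s \<otimes> x') ` ?B" using x'M by blast
    qed
  next
    show "(\<lambda>x'. s \<otimes> x') ` ?B \<subseteq> ?A"
    proof
      fix x assume "x \<in> (\<lambda>x'. s \<otimes> x') ` ?B"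
      then obtain x' where x': "x' \<in> M" "HI w x'" "hdD (s \<otimes> hdD x') = s" "x = s \<otimes> x'" by blast
      have "HI (Suc w) x" using HI_step[OF s _ x'(2)] x' by simp
      moreover have "hdD x = s" using HL[OF D_M[OF s] x'(1)] x' by simp
      ultimately show "x \<in> ?A" using x' s by simp
    qed
  qed
  have inj: "inj_on (\<lambda>x'. s \<otimes> x') ?B"
    by (rule inj_onI) (use sc in auto)
  have cA: "card ?A = card ?B" unfolding img using card_image[OF inj] .
  have "?B = (\<Union>s'\<in>{s'\<in>D. hdD (s \<otimes> s') = s}. {x \<in> M. HI w x \<and> hdD x = s'})"
    using hd_D by auto
  then have "card ?B = (\<Sum>s'\<in>{s'\<in>D. hdD (s \<otimes> s') = s}. cnt w s')"
    unfolding cnt_def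
    using card_UN_disjoint[of "{s'\<in>D. hdD (s \<otimes> s') = s}" "\<lambda>s'. {x \<in> M. HI w x \<and> hdD x = s'}"] finD cnt_fin
    by auto
  also have "\<dots> = (\<Sum>s'\<in>D. if hdD (s \<otimes> s') = s then cnt w s' else 0)"
    using sum.inter_filter[OF finD] by simp
  also have "\<dots> = (\<Sum>s'\<in>D. (if hdD (s \<otimes> s') = s then 1 else 0) * cnt w s')"
    by (rule sum.cong) auto
  finally show ?thesis unfolding cnt_def[of "Suc w"] using cA by simp
qed

lemma Cf_rational: "rational_fps (Abs_fps (\<lambda>w. of_nat (cR w) :: rat))"
proof -
  have T: "\<forall>s\<in>D. rational_fps (Abs_fps (\<lambda>w. (of_nat (cnt w s) :: rat)))"
  proof (rule transfer_rational[OF finD, where A = "\<lambda>s s'. if hdD (s \<otimes> s') = s then 1 else 0"])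
    fix w s assume "s \<in> D"
    then show "(of_nat (cnt (Suc w) s) :: rat) =
      (\<Sum>s'\<in>D. (if hdD (s \<otimes> s') = s then 1 else 0) * of_nat (cnt w s'))"
      using cnt_Suc[of s w] by (simp add: of_nat_sum) (rule sum.cong, auto)
  qed
  have "Abs_fps (\<lambda>w. of_nat (cR w) :: rat) = (\<Sum>s\<in>{s\<in>D. red s}. Abs_fps (\<lambda>w. of_nat (cnt w s)))"
    by (rule fps_ext) (simp add: cR_sum fps_sum_nth of_nat_sum)
  then show ?thesis using T by (auto intro!: rat_fps_sum)
qed

lemma one_minus_X: "fps_nth ((1 - fps_X) * (F :: rat fps)) n = fps_nth F n - (if n = 0 then 0 else fps_nth F (n - 1))"
proof -
  have "(1 - fps_X) * F = F - fps_X * F" by (simp add: algebra_simps)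
  then show ?thesis by (simp add: fps_X_mult_nth)
qed

theorem main: "rational_fps (Abs_fps (\<lambda>n. of_nat (coset_count G H S n) :: rat))"
proof -
  define Cf where "Cf = Abs_fps (\<lambda>w. of_nat (cR w) :: rat)"
  define P where "P = fps_deriv (fps_X * Cf)"
  have Pn: "fps_nth P n = of_nat (Suc n) * of_nat (cR n)" for n
    unfolding P_def Cf_def by (simp add: fps_X_mult_nth algebra_simps)
  have Ln: "(of_nat (Lc n) :: rat) = fps_nth P n - (if n = 0 then 0 else fps_nth P (n - 1))" for n
  proof -
    have "(of_nat (Lc n) :: rat) + of_nat n * of_nat (cR (n - 1)) = of_nat (Suc n) * of_nat (cR n)"
      using Lc_eq[of n] by (metis of_nat_add of_nat_mult)
    then show ?thesis unfolding Pn by (cases n) (auto simp: algebra_simps)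
  qed
  have e: "Abs_fps (\<lambda>n. of_nat (coset_count G H S n) :: rat) = (1 - fps_X) * ((1 - fps_X) * P)"
  proof (rule fps_ext)
    fix n
    show "fps_nth (Abs_fps (\<lambda>n. of_nat (coset_count G H S n) :: rat)) n = fps_nth ((1 - fps_X) * ((1 - fps_X) * P)) n"
    proof (cases n)
      case 0 then show ?thesis using count_eq0 Ln[of 0] by (simp add: one_minus_X)
    next
      case (Suc m)
      have "(of_nat (coset_count G H S (Suc m)) :: rat) = of_nat (Lc (Suc m)) - of_nat (Lc m)"
        using count_eqS[of m] Lc_mono[of m] by (simp add: of_nat_diff)
      moreover have "(of_nat (Lc (Suc m)) :: rat) = fps_nth P (Suc m) - fps_nth P m" using Ln[of "Suc m"] by simp
      moreover have "(of_nat (Lc m) :: rat) = fps_nth P m - (if m = 0 then 0 else fps_nth P (m - 1))" using Ln[of m] by simp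
      ultimately show ?thesis using Suc by (simp add: one_minus_X)
    qed
  qed
  have r1: "rational_fps (1 - fps_X :: rat fps)"
    using rat_fps_diff[OF rat_fps_const[of 1] rat_fps_X] by simp
  have rP: "rational_fps P" unfolding P_def
    using rat_fps_deriv[OF rat_fps_mult[OF rat_fps_X Cf_rational[folded Cf_def]]] .
  show ?thesis unfolding e using r1 rP by (intro rat_fps_mult)
qed

end


theorem corollary4p3:
  fixes G :: "('a, 'b) monoid_scheme" and M H N :: "'a set" and \<Delta> \<delta> :: 'a
  assumes "garside_structure G M \<Delta>"
    and "parabolic_substructure G M \<Delta> H N \<delta>"
    and "H \<noteq> {\<one>\<^bsub>G\<^esub>}"
  shows "rational_fps (Abs_fps (\<lambda>n. of_nat (coset_count G H (Div G M \<Delta> - {\<one>\<^bsub>G\<^esub>}) n) :: rat))"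
proof -
  have g: "group G" using assms(1) unfolding garside_structure_def by blast
  have "para G M \<Delta> H N \<delta>"
    unfolding para_def para_axioms_def gars_def gars_axioms_def using g assms(1,2) by blast
  then interpret P: para G M \<Delta> H N \<delta> .
  show ?thesis using P.main .
qed

end
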